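(* Fix integers $2\le r\le k$, let $u(n)$ satisfy $u(n)\to\infty$, $u(n)/n\to0$, and let $m=\lfloor\mu n^{r-1}/u(n)^{r-2}\rfloor$ for a constant $\mu>0$. Then for any constants $\tau>0$ and $\lambda\in\mathbb R$, $$\mathbb E\bigl[\exp\{\lambda\,\overline{E}(\lfloor\tau u(n)\rfloor)\}\bigr]=\exp\Bigl\{\varphi_{k,r}(\mu,\lambda,\tau)\,u(n)+O\bigl(\max\{1,u(n)^2/n\}\bigr)\Bigr\}.$$
   Context: Let $N(t):=n-u(n)-t$ and $p_j(n):=\binom{n-u(n)}{j}\binom{u(n)}{k-j}/\binom{n}{k}$ for $j=0,\dots,k$. Let $(C_0,\dots,C_k)$ have the multinomial distribution with $m$ trials and cell probabilities $p_0(n),\dots,p_k(n)$ (this is the distribution of the numbers of constraints of the random bipartite graph having exactly $j$ neighbours in $\{u(n)+1,\dots,n\}$). The Markov chain $(\overline{E}(t),\overline{C}_{k-r+2}(t),\dots,\overline{C}_k(t))_{t\ge0}$ starts at $\overline{E}(0)=\sum_{j=1}^{k-r+1}jC_j$, $\overline{C}_j(0)=C_j$ for $k-r+2\le j\le k$, and evolves by $\overline{C}_k(t+1)=\overline{C}_k(t)$; $\overline{C}_j(t+1)=\overline{C}_j(t)+\overline{R}_{j+1}(t)$ for $k-r+2\le j\le k-1$; $\overline{E}(t+1)=\overline{E}(t)-1+(k-r+1)\overline{R}_{k-r+2}(t)$, where, conditionally on the state at time $t$, the $\overline{R}_j(t)$ ($k-r+2\le j\le k$) are independent with $\overline{R}_j(t)\sim\mathrm{Binom}(\overline{C}_j(t),\,j/N(t))$.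 $\varphi_{k,r}(\mu,\lambda,\tau):=\mu\bigl(e^{(k-r+1)\lambda}-1\bigr)\binom{k}{r-1}(1+\tau)^{r-1}-\lambda\tau$. *)

theory Defs
  imports "HOL-Probability.Probability" "HOL-Library.Landau_Symbols"
begin

definition Nt :: "nat \<Rightarrow> nat \<Rightarrow> nat \<Rightarrow> real" where
  "Nt n un t = real n - real un - real t"

definition pj :: "nat \<Rightarrow> nat \<Rightarrow> nat \<Rightarrow> nat \<Rightarrow> real" where
  "pj k n un j = real ((n - un) choose j) * real (un choose (k - j)) / real (n choose k)"

text \<open>Distribution of a single cell index j in {0..k} with probabilities p_j(n).
  (These probabilities sum to 1 whenever u(n) \<le> n, by Vandermonde.)\<close>
definition cell_pmf :: "nat \<Rightarrow> nat \<Rightarrow> nat \<Rightarrow> nat pmf" where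
  "cell_pmf k n un = embed_pmf (\<lambda>j. if j \<le> k then pj k n un j else 0)"

fun multinom_pmf :: "nat pmf \<Rightarrow> nat \<Rightarrow> (nat \<Rightarrow> nat) pmf" where
  "multinom_pmf P 0 = return_pmf (\<lambda>_. 0)"
| "multinom_pmf P (Suc m) =
     bind_pmf (multinom_pmf P m) (\<lambda>c. bind_pmf P (\<lambda>j. return_pmf (c(j := c j + 1))))"

fun R_pmf :: "real \<Rightarrow> (nat \<Rightarrow> nat) \<Rightarrow> nat list \<Rightarrow> (nat \<Rightarrow> nat) pmf" where
  "R_pmf N C [] = return_pmf (\<lambda>_. 0)"
| "R_pmf N C (j # js) =
     bind_pmf (R_pmf N C js) (\<lambda>R. bind_pmf (binomial_pmf (C j) (real j / N))
        (\<lambda>x. return_pmf (R(j := x))))"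

text \<open>The Markov chain (E(t), C_{k-r+2}(t), ..., C_k(t)); the state stores
  E(t) as an integer and the C-values as a function on indices
  (only indices k-r+2..k are relevant).\<close>
fun chain_pmf :: "nat \<Rightarrow> nat \<Rightarrow> nat \<Rightarrow> nat \<Rightarrow> nat \<Rightarrow> nat \<Rightarrow> (int \<times> (nat \<Rightarrow> nat)) pmf" where
  "chain_pmf k r n un m 0 =
     bind_pmf (multinom_pmf (cell_pmf k n un) m)
       (\<lambda>C. return_pmf (int (\<Sum>j=1..k-r+1. j * C j), C))"
| "chain_pmf k r n un m (Suc t) =
     bind_pmf (chain_pmf k r n un m t) (\<lambda>(E, C).
       bind_pmf (R_pmf (Nt n un t) C [k-r+2..<k+1]) (\<lambda>R.
         return_pmf (E - 1 + int (k-r+1) * int (R (k-r+2)),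
                     \<lambda>j. if k-r+2 \<le> j \<and> j \<le> k-1 then C j + R (j+1) else C j)))"

definition phi :: "nat \<Rightarrow> nat \<Rightarrow> real \<Rightarrow> real \<Rightarrow> real \<Rightarrow> real" where
  "phi k r \<mu> lam \<tau> = \<mu> * (exp (real (k-r+1) * lam) - 1) * real (k choose (r-1)) * (1+\<tau>)^(r-1)
      - lam * \<tau>"

end

theory Submission
  imports Defs
begin


lemma exp_cong_pmf:
  assumes "\<And>x. x \<in> set_pmf p \<Longrightarrow> f x = g x"
  shows "measure_pmf.expectation p f = measure_pmf.expectation p (g :: _ \<Rightarrow> real)"
  by (rule integral_cong_AE) (use assms in \<open>auto simp: AE_measure_pmf_iff\<close>)

lemma exp_bind:
  fixes h :: "_ \<Rightarrow> real"
  assumes "finite (set_pmf p)" "\<And>x. x \<in> set_pmf p \<Longrightarrow> finite (set_pmf (f x))"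
  shows "measure_pmf.expectation (bind_pmf p f) h =
         measure_pmf.expectation p (\<lambda>x. measure_pmf.expectation (f x) h)"
proof -
  have "measure_pmf.expectation (bind_pmf p f) h =
        (\<Sum>a\<in>set_pmf p. pmf p a *\<^sub>R measure_pmf.expectation (f a) h)"
    by (rule pmf_expectation_bind[OF assms(1)]) (use assms in auto)
  also have "\<dots> = measure_pmf.expectation p (\<lambda>x. measure_pmf.expectation (f x) h)"
    by (subst integral_measure_pmf[OF assms(1)]) auto
  finally show ?thesis .
qed

lemma exp_binomial_pow:
  assumes "0 \<le> p" "p \<le> 1"
  shows "measure_pmf.expectation (binomial_pmf c p) (\<lambda>x. (y::real) ^ x) = (1 - p + p * y) ^ c"
proof -
  have "measure_pmf.expectation (binomial_pmf c p) (\<lambda>x. y ^ x) =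
        (\<Sum>x\<le>c. pmf (binomial_pmf c p) x *\<^sub>R y ^ x)"
    by (rule integral_measure_pmf) (use assms in \<open>auto simp: set_pmf_binomial_eq split: if_splits\<close>)
  also have "\<dots> = (\<Sum>x\<le>c. real (c choose x) * (p*y) ^ x * (1 - p) ^ (c - x))"
    using assms by (intro sum.cong) (auto simp: power_mult_distrib)
  also have "\<dots> = (p * y + (1 - p)) ^ c"
    by (subst binomial_ring) simp
  finally show ?thesis by (simp add: algebra_simps)
qed

lemma finite_binomial:
  assumes "0 \<le> p" "p \<le> 1"
  shows "finite (set_pmf (binomial_pmf c p))"
  using assms by (auto simp: set_pmf_binomial_eq)

lemma finite_R_pmf:
  assumes "\<And>j. j \<in> set js \<Longrightarrow> 0 \<le> real j / N \<and> real j / N \<le> 1"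
  shows "finite (set_pmf (R_pmf N C js))"
  using assms by (induction js) (auto simp: finite_binomial)

lemma exp_R_pmf:
  assumes "\<And>j. j \<in> set js \<Longrightarrow> 0 \<le> real j / N \<and> real j / N \<le> 1" "distinct js"
  shows "measure_pmf.expectation (R_pmf N C js) (\<lambda>R. \<Prod>i\<in>set js. (y i :: real) ^ R i)
       = (\<Prod>i\<in>set js. (1 - real i / N + real i / N * y i) ^ C i)"
  using assms
proof (induction js)
  case Nil
  then show ?case by simp
next
  case (Cons j js)
  have fin: "finite (set_pmf (R_pmf N C js))" using Cons.prems by (intro finite_R_pmf) auto
  have pj: "0 \<le> real j / N" "real j / N \<le> 1" using Cons.prems by auto
  have "measure_pmf.expectation (R_pmf N C (j # js)) (\<lambda>R. \<Prod>i\<in>set (j#js). y i ^ R i)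
      = measure_pmf.expectation (R_pmf N C js) (\<lambda>R. measure_pmf.expectation
           (binomial_pmf (C j) (real j / N)) (\<lambda>x. (\<Prod>i\<in>set js. y i ^ R i) * y j ^ x))"
  proof -
    have "measure_pmf.expectation (R_pmf N C (j # js)) (\<lambda>R. \<Prod>i\<in>set (j#js). y i ^ R i)
       = measure_pmf.expectation (R_pmf N C js) (\<lambda>R. measure_pmf.expectation
           (binomial_pmf (C j) (real j / N)) (\<lambda>x. measure_pmf.expectation (return_pmf (R(j := x)))
             (\<lambda>R. \<Prod>i\<in>set (j#js). y i ^ R i)))"
      using fin pj by (simp add: exp_bind finite_binomial)
    also have "\<dots> = measure_pmf.expectation (R_pmf N C js) (\<lambda>R. measure_pmf.expectation
           (binomial_pmf (C j) (real j / N)) (\<lambda>x. (\<Prod>i\<in>set js. y i ^ R i) * y j ^ x))"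
    proof -
      have "(\<Prod>i\<in>set (j#js). y i ^ (R(j := x)) i) = (\<Prod>i\<in>set js. y i ^ R i) * y j ^ x" for R x
      proof -
        have "j \<notin> set js" using Cons.prems by auto
        hence "(\<Prod>i\<in>set (j#js). y i ^ (R(j := x)) i) = y j ^ x * (\<Prod>i\<in>set js. y i ^ (R(j := x)) i)"
          by simp
        also have "(\<Prod>i\<in>set js. y i ^ (R(j := x)) i) = (\<Prod>i\<in>set js. y i ^ R i)"
          using \<open>j \<notin> set js\<close> by (intro prod.cong) auto
        finally show ?thesis by simp
      qed
      thus ?thesis by simp
    qed
    finally show ?thesis .
  qed
  also have "\<dots> = measure_pmf.expectation (R_pmf N C js) (\<lambda>R. (\<Prod>i\<in>set js. y i ^ R i)
         * (1 - real j / N + real j / N * y j) ^ C j)"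
    using pj by (simp add: exp_binomial_pow)
  also have "\<dots> = (\<Prod>i\<in>set js. (1 - real i / N + real i / N * y i) ^ C i)
         * (1 - real j / N + real j / N * y j) ^ C j"
    using Cons by simp
  also have "\<dots> = (\<Prod>i\<in>set (j#js). (1 - real i / N + real i / N * y i) ^ C i)"
    using Cons.prems by simp
  finally show ?case .
qed


lemma finite_multinom: "finite (set_pmf P) \<Longrightarrow> finite (set_pmf (multinom_pmf P m))"
  by (induction m) auto

lemma exp_multinom:
  assumes P: "set_pmf P \<subseteq> {..k}" "finite (set_pmf P)"
  shows "measure_pmf.expectation (multinom_pmf P m) (\<lambda>c. \<Prod>j\<le>k. (z j :: real) ^ c j)
       = (measure_pmf.expectation P z) ^ m"
proof (induction m)
  case 0
  then show ?case by simp
next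
  case (Suc m)
  have key: "(\<Prod>i\<le>k. z i ^ (c(j := c j + 1)) i) = z j * (\<Prod>i\<le>k. z i ^ c i)"
    if "j \<le> k" for c j
  proof -
    have "(\<Prod>i\<le>k. z i ^ (c(j := c j + 1)) i) = z j ^ (c j + 1) * (\<Prod>i\<in>{..k}-{j}. z i ^ (c(j := c j + 1)) i)"
      using that by (subst prod.remove[of _ j]) auto
    also have "(\<Prod>i\<in>{..k}-{j}. z i ^ (c(j := c j + 1)) i) = (\<Prod>i\<in>{..k}-{j}. z i ^ c i)"
      by (intro prod.cong) auto
    also have "(\<Prod>i\<le>k. z i ^ c i) = z j ^ c j * (\<Prod>i\<in>{..k}-{j}. z i ^ c i)"
      using that by (subst prod.remove[of _ j]) auto
    ultimately show ?thesis by simp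
  qed
  have "measure_pmf.expectation (multinom_pmf P (Suc m)) (\<lambda>c. \<Prod>j\<le>k. z j ^ c j)
     = measure_pmf.expectation (multinom_pmf P m) (\<lambda>c. measure_pmf.expectation P
          (\<lambda>j. measure_pmf.expectation (return_pmf (c(j := c j + 1))) (\<lambda>c. \<Prod>j\<le>k. z j ^ c j)))"
    using P by (simp add: exp_bind finite_multinom)
  also have "\<dots> = measure_pmf.expectation (multinom_pmf P m) (\<lambda>c. measure_pmf.expectation P
          (\<lambda>j. (\<Prod>i\<le>k. z i ^ c i) * z j))"
    by (intro Bochner_Integration.integral_cong refl exp_cong_pmf) (use P key in auto)
  also have "\<dots> = measure_pmf.expectation P z * (measure_pmf.expectation P z) ^ m"
    using Suc by simp
  finally show ?case by simp
qed

lemma pj_nonneg: "0 \<le> pj k n un j"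
  by (simp add: pj_def)

lemma pj_sum: assumes "un \<le> n" "k \<le> n" shows "(\<Sum>j\<le>k. pj k n un j) = 1"
proof -
  have "(\<Sum>j\<le>k. ((n - un) choose j) * (un choose (k - j))) = n choose k"
    using vandermonde[of "n-un" un k] assms by simp
  hence "(\<Sum>j\<le>k. real ((n - un) choose j) * real (un choose (k - j))) = real (n choose k)"
    by (metis (no_types, lifting) of_nat_mult of_nat_sum sum.cong)
  moreover have "real (n choose k) > 0" using assms by simp
  ultimately show ?thesis
    by (simp add: pj_def flip: sum_divide_distrib)
qed

lemma pmf_cell:
  assumes "un \<le> n" "k \<le> n"
  shows "pmf (cell_pmf k n un) j = (if j \<le> k then pj k n un j else 0)"
  unfolding cell_pmf_def
proof (rule pmf_embed_pmf)
  show "\<And>x. 0 \<le> (if x \<le> k then pj k n un x else 0)" by (simp add: pj_nonneg)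
  have "(\<integral>\<^sup>+ x. ennreal (if x \<le> k then pj k n un x else 0) \<partial>count_space UNIV)
     = (\<Sum>x\<le>k. ennreal (if x \<le> k then pj k n un x else 0))"
    by (rule nn_integral_count_space') auto
  also have "\<dots> = ennreal (\<Sum>x\<le>k. pj k n un x)"
    by (simp add: pj_nonneg flip: sum_ennreal)
  also have "\<dots> = 1" using pj_sum[OF assms] by simp
  finally show "(\<integral>\<^sup>+ x. ennreal (if x \<le> k then pj k n un x else 0) \<partial>count_space UNIV) = 1" .
qed

lemma set_cell: assumes "un \<le> n" "k \<le> n" shows "set_pmf (cell_pmf k n un) \<subseteq> {..k}"
  using pmf_cell[OF assms] by (auto simp: set_pmf_iff split: if_splits)

lemma exp_cell:
  assumes "un \<le> n" "k \<le> n"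
  shows "measure_pmf.expectation (cell_pmf k n un) z = (\<Sum>j\<le>k. pj k n un j * z j)"
  by (subst integral_measure_pmf[of "{..k}"]) (use set_cell[OF assms] pmf_cell[OF assms] in auto)

definition Fx :: "real \<Rightarrow> nat \<Rightarrow> nat \<Rightarrow> (nat \<Rightarrow> real) \<Rightarrow> int \<times> (nat \<Rightarrow> nat) \<Rightarrow> real" where
  "Fx lam A k x = (\<lambda>(E, C). exp (lam * real_of_int E) * (\<Prod>j\<in>{A+1..k}. x j ^ C j))"

definition stp :: "nat \<Rightarrow> nat \<Rightarrow> (nat \<Rightarrow> real) \<Rightarrow> (nat \<Rightarrow> real) \<Rightarrow> nat \<Rightarrow> real" where
  "stp A k qq x j = (if A < j \<and> j \<le> k then x j * (1 - qq j + qq j * x (j - 1)) else x j)"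

lemma finite_chain:
  assumes "un \<le> n" "k \<le> n"
    and q: "\<And>t' j. t' < t \<Longrightarrow> j \<in> {k-r+2..k} \<Longrightarrow> 0 \<le> real j / Nt n un t' \<and> real j / Nt n un t' \<le> 1"
  shows "finite (set_pmf (chain_pmf k r n un m t))"
  using q
proof (induction t)
  case 0
  have "finite (set_pmf (cell_pmf k n un))"
    using set_cell[OF assms(1,2)] finite_subset by blast
  then show ?case by (simp add: finite_multinom)
next
  case (Suc t)
  have IH: "finite (set_pmf (chain_pmf k r n un m t))" using Suc by auto
  have "finite (set_pmf (R_pmf (Nt n un t) C [k-r+2..<k+1]))" for C
    by (rule finite_R_pmf) (use Suc.prems in auto)
  then show ?case using IH by (auto split: prod.splits)
qed

lemma prod_shift_aux:
  fixes g :: "nat \<Rightarrow> real"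
  assumes "A + 1 \<le> k"
  shows "(\<Prod>j\<in>{A+1..k}. (if j \<le> k - 1 then g (j+1) else 1)) = (\<Prod>i\<in>{A+2..k}. g i)"
proof -
  obtain k' where k': "k = Suc k'" using assms by (cases k) auto
  have "(\<Prod>j\<in>{A+1..k}. (if j \<le> k - 1 then g (j+1) else 1)) = (\<Prod>j\<in>{A+1..k'}. g (j+1))"
  proof -
    have "{A+1..k} = insert k {A+1..k'}" using k' assms by auto
    hence "(\<Prod>j\<in>{A+1..k}. (if j \<le> k - 1 then g (j+1) else 1))
        = (\<Prod>j\<in>{A+1..k'}. (if j \<le> k - 1 then g (j+1) else 1))"
      using k' by simp
    also have "\<dots> = (\<Prod>j\<in>{A+1..k'}. g (j+1))" using k' by (intro prod.cong) auto
    finally show ?thesis .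
  qed
  also have "\<dots> = (\<Prod>i\<in>{Suc (A+1)..Suc k'}. g i)"
    by (subst prod.shift_bounds_cl_Suc_ivl) simp
  finally show ?thesis using k' by simp
qed

lemma chain_step:
  assumes r: "2 \<le> r" "r \<le> k"
    and q: "\<And>j. j \<in> {k-r+2..k} \<Longrightarrow> 0 \<le> real j / Nt n un t \<and> real j / Nt n un t \<le> 1"
    and fin: "finite (set_pmf (chain_pmf k r n un m t))"
    and xA: "x (k-r+1) = exp (lam * real (k-r+1))"
  shows "measure_pmf.expectation (chain_pmf k r n un m (Suc t)) (Fx lam (k-r+1) k x)
     = exp (-lam) * measure_pmf.expectation (chain_pmf k r n un m t)
          (Fx lam (k-r+1) k (stp (k-r+1) k (\<lambda>j. real j / Nt n un t) x))"
proof -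
  define A where "A = k - r + 1"
  have A2: "k - r + 2 = A + 1" using r unfolding A_def by simp
  have Ak: "A + 1 \<le> k" "A < k" using r unfolding A_def by auto
  define N where "N = Nt n un t"
  define q where "q = (\<lambda>j. real j / N)"
  have setJ: "set [A+1..<k+1] = {A+1..k}" by auto
  have qJ: "\<And>j. j \<in> set [A+1..<k+1] \<Longrightarrow> 0 \<le> real j / N \<and> real j / N \<le> 1"
    using q unfolding N_def A2 by auto
  have finR: "finite (set_pmf (R_pmf N C [A+1..<k+1]))" for C
    by (rule finite_R_pmf[OF qJ])
  have finR': "finite (set_pmf (R_pmf N C [Suc A..<Suc k]))" for C
    using finR[of C] by simp
  have pw: "Fx lam A k x (E - 1 + int A * int (R (A+1)),
              \<lambda>j. if A+1 \<le> j \<and> j \<le> k-1 then C j + R (j+1) else C j)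
       = exp (lam * (real_of_int E - 1)) * (\<Prod>j\<in>{A+1..k}. x j ^ C j) * (\<Prod>i\<in>{A+1..k}. x (i-1) ^ R i)"
    for E C R
  proof -
    have a: "(\<Prod>j\<in>{A+1..k}. x j ^ (if A+1 \<le> j \<and> j \<le> k-1 then C j + R (j+1) else C j))
        = (\<Prod>j\<in>{A+1..k}. x j ^ C j) * (\<Prod>j\<in>{A+1..k}. (if j \<le> k - 1 then x (j+1-1) ^ R (j+1) else 1))"
      by (subst prod.distrib[symmetric]) (intro prod.cong, auto simp: power_add)
    have b: "(\<Prod>j\<in>{A+1..k}. (if j \<le> k - 1 then x (j+1-1) ^ R (j+1) else 1))
           = (\<Prod>i\<in>{A+2..k}. x (i-1) ^ R i)"
      using prod_shift_aux[OF Ak(1), of "\<lambda>i. x (i-1) ^ R i"] by simp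
    have c: "(\<Prod>i\<in>{A+1..k}. x (i-1) ^ R i) = x A ^ R (A+1) * (\<Prod>i\<in>{A+2..k}. x (i-1) ^ R i)"
      using Ak by (subst prod.atLeast_Suc_atMost) auto
    have d: "exp (lam * real_of_int (E - 1 + int A * int (R (A+1))))
        = exp (lam * (real_of_int E - 1)) * x A ^ R (A+1)"
    proof -
      have "lam * real_of_int (E - 1 + int A * int (R (A+1)))
          = lam * (real_of_int E - 1) + real (R (A+1)) * (lam * real A)"
        by (simp add: algebra_simps)
      hence "exp (lam * real_of_int (E - 1 + int A * int (R (A+1))))
          = exp (lam * (real_of_int E - 1)) * exp (lam * real A) ^ R (A+1)"
        by (simp add: exp_add exp_of_nat_mult)
      thus ?thesis using xA unfolding A_def[symmetric] by simp
    qed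
    show ?thesis unfolding Fx_def using a b c d by simp
  qed
  have inner: "measure_pmf.expectation (R_pmf N C [A+1..<k+1]) (\<lambda>R.
         measure_pmf.expectation (return_pmf (E - 1 + int A * int (R (A+1)),
              \<lambda>j. if A+1 \<le> j \<and> j \<le> k-1 then C j + R (j+1) else C j)) (Fx lam A k x))
      = exp (-lam) * Fx lam A k (stp A k q x) (E, C)" for E C
  proof -
    have "measure_pmf.expectation (R_pmf N C [A+1..<k+1]) (\<lambda>R.
         measure_pmf.expectation (return_pmf (E - 1 + int A * int (R (A+1)),
              \<lambda>j. if A+1 \<le> j \<and> j \<le> k-1 then C j + R (j+1) else C j)) (Fx lam A k x))
      = exp (lam * (real_of_int E - 1)) * (\<Prod>j\<in>{A+1..k}. x j ^ C j) *
        measure_pmf.expectation (R_pmf N C [A+1..<k+1]) (\<lambda>R. \<Prod>i\<in>set [A+1..<k+1]. x (i-1) ^ R i)"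
      using pw setJ by simp
    also have "\<dots> = exp (lam * (real_of_int E - 1)) * (\<Prod>j\<in>{A+1..k}. x j ^ C j) *
        (\<Prod>i\<in>{A+1..k}. (1 - real i / N + real i / N * x (i-1)) ^ C i)"
    proof -
      have "measure_pmf.expectation (R_pmf N C [A+1..<k+1]) (\<lambda>R. \<Prod>i\<in>set [A+1..<k+1]. x (i-1) ^ R i)
          = (\<Prod>i\<in>set [A+1..<k+1]. (1 - real i / N + real i / N * x (i-1)) ^ C i)"
        by (rule exp_R_pmf) (use qJ in auto)
      thus ?thesis by (simp only: setJ)
    qed
    also have "\<dots> = exp (-lam) * (exp (lam * real_of_int E) *
        (\<Prod>j\<in>{A+1..k}. (x j * (1 - real j / N + real j / N * x (j-1))) ^ C j))"
    proof -
      have "(\<Prod>j\<in>{A+1..k}. x j ^ C j) * (\<Prod>i\<in>{A+1..k}. (1 - real i / N + real i / N * x (i-1)) ^ C i)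
          = (\<Prod>j\<in>{A+1..k}. (x j * (1 - real j / N + real j / N * x (j-1))) ^ C j)"
        by (simp only: prod.distrib[symmetric] power_mult_distrib)
      moreover have "exp (lam * (real_of_int E - 1)) = exp (-lam) * exp (lam * real_of_int E)"
        by (simp add: algebra_simps flip: exp_add)
      ultimately show ?thesis by (simp only: mult.assoc)
    qed
    also have "\<dots> = exp (-lam) * Fx lam A k (stp A k q x) (E, C)"
      unfolding Fx_def stp_def q_def by (auto intro!: prod.cong)
    finally show ?thesis .
  qed
  have "measure_pmf.expectation (chain_pmf k r n un m (Suc t)) (Fx lam A k x)
     = measure_pmf.expectation (chain_pmf k r n un m t) (\<lambda>(E, C).
         measure_pmf.expectation (R_pmf N C [A+1..<k+1]) (\<lambda>R.
         measure_pmf.expectation (return_pmf (E - 1 + int A * int (R (A+1)),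
              \<lambda>j. if A+1 \<le> j \<and> j \<le> k-1 then C j + R (j+1) else C j)) (Fx lam A k x)))"
  proof -
    define G where "G = (\<lambda>(E, C). bind_pmf (R_pmf N C [A+1..<k+1]) (\<lambda>R. return_pmf (E - 1 + int A * int (R (A+1)),
              \<lambda>j. if A+1 \<le> j \<and> j \<le> k-1 then C j + R (j+1) else C j)))"
    have ch: "chain_pmf k r n un m (Suc t) = bind_pmf (chain_pmf k r n un m t) G"
      unfolding G_def A_def N_def by simp
    have finG: "finite (set_pmf (G s))" for s
      unfolding G_def using finR by (auto split: prod.splits)
    have "measure_pmf.expectation (chain_pmf k r n un m (Suc t)) (Fx lam A k x)
       = measure_pmf.expectation (chain_pmf k r n un m t) (\<lambda>s. measure_pmf.expectation (G s) (Fx lam A k x))"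
      unfolding ch by (rule exp_bind[OF fin finG])
    also have "\<dots> = measure_pmf.expectation (chain_pmf k r n un m t) (\<lambda>(E, C).
         measure_pmf.expectation (R_pmf N C [A+1..<k+1]) (\<lambda>R.
         measure_pmf.expectation (return_pmf (E - 1 + int A * int (R (A+1)),
              \<lambda>j. if A+1 \<le> j \<and> j \<le> k-1 then C j + R (j+1) else C j)) (Fx lam A k x)))"
      by (intro Bochner_Integration.integral_cong refl)
         (auto simp: G_def exp_bind[OF finR'] simp del: upt_Suc split: prod.splits)
    finally show ?thesis .
  qed
  also have "\<dots> = measure_pmf.expectation (chain_pmf k r n un m t) (\<lambda>s. exp (-lam) * Fx lam A k (stp A k q x) s)"
  proof (intro Bochner_Integration.integral_cong refl)
    fix s :: "int \<times> (nat \<Rightarrow> nat)"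
    obtain E C where s: "s = (E, C)" by (cases s)
    show "(\<lambda>(E, C).
         measure_pmf.expectation (R_pmf N C [A+1..<k+1]) (\<lambda>R.
         measure_pmf.expectation (return_pmf (E - 1 + int A * int (R (A+1)),
              \<lambda>j. if A+1 \<le> j \<and> j \<le> k-1 then C j + R (j+1) else C j)) (Fx lam A k x))) s
        = exp (-lam) * Fx lam A k (stp A k q x) s"
      unfolding s using inner[where E=E and C=C] by (simp only: prod.case)
  qed
  finally show ?thesis unfolding A_def q_def N_def by simp
qed


fun Hh :: "nat \<Rightarrow> nat \<Rightarrow> (nat \<Rightarrow> nat \<Rightarrow> real) \<Rightarrow> nat \<Rightarrow> nat \<Rightarrow> (nat \<Rightarrow> real) \<Rightarrow> nat \<Rightarrow> real" where
  "Hh A k q ofs 0 x = x"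
| "Hh A k q ofs (Suc s) x = stp A k (q ofs) (Hh A k q (Suc ofs) s x)"

lemma Hh_Suc': "Hh A k q ofs (Suc s) x = Hh A k q ofs s (stp A k (q (ofs + s)) x)"
  by (induction s arbitrary: ofs) auto

lemma stp_A: "stp A k qq x A = x A"
  by (simp add: stp_def)

lemma Hh_A: "Hh A k q ofs s x A = x A"
  by (induction s arbitrary: ofs) (auto simp: stp_A)

lemma chain0:
  assumes "un \<le> n" "k \<le> n" "2 \<le> r" "r \<le> k"
  shows "measure_pmf.expectation (chain_pmf k r n un m 0) (Fx lam (k-r+1) k x)
       = (\<Sum>j\<le>k. pj k n un j * (if j \<le> k-r+1 then exp (lam * real j) else x j)) ^ m"
proof -
  define A where "A = k - r + 1"
  have Ak: "A \<le> k" using assms unfolding A_def by auto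
  define z where "z = (\<lambda>j. if j \<le> A then exp (lam * real j) else x j)"
  have fincell: "finite (set_pmf (cell_pmf k n un))"
    using set_cell[OF assms(1,2)] finite_subset by blast
  have pw: "Fx lam A k x (int (\<Sum>j=1..A. j * C j), C) = (\<Prod>j\<le>k. z j ^ C j)" for C
  proof -
    have s1: "(\<Sum>j=1..A. j * C j) = (\<Sum>j\<le>A. j * C j)"
    proof -
      have "{..A} = insert 0 {1..A}" by auto
      thus ?thesis by simp
    qed
    have "exp (lam * real_of_int (int (\<Sum>j=1..A. j * C j))) = exp (\<Sum>j\<le>A. real (C j) * (lam * real j))"
      unfolding s1 by (simp add: sum_distrib_left algebra_simps)
    also have "\<dots> = (\<Prod>j\<le>A. exp (lam * real j) ^ C j)"
      by (simp add: exp_sum exp_of_nat_mult)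
    also have "\<dots> = (\<Prod>j\<le>A. z j ^ C j)" unfolding z_def by (intro prod.cong) auto
    finally have e: "exp (lam * real_of_int (int (\<Sum>j=1..A. j * C j))) = (\<Prod>j\<le>A. z j ^ C j)" .
    have p: "(\<Prod>j\<in>{A+1..k}. x j ^ C j) = (\<Prod>j\<in>{A+1..k}. z j ^ C j)"
      unfolding z_def by (intro prod.cong) auto
    have u: "{..k} = {..A} \<union> {A+1..k}" using Ak by auto
    have "(\<Prod>j\<le>k. z j ^ C j) = (\<Prod>j\<le>A. z j ^ C j) * (\<Prod>j\<in>{A+1..k}. z j ^ C j)"
      unfolding u by (subst prod.union_disjoint) auto
    thus ?thesis unfolding Fx_def using e p by simp
  qed
  have "measure_pmf.expectation (chain_pmf k r n un m 0) (Fx lam A k x)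
      = measure_pmf.expectation (multinom_pmf (cell_pmf k n un) m)
          (\<lambda>C. measure_pmf.expectation (return_pmf (int (\<Sum>j=1..A. j * C j), C)) (Fx lam A k x))"
    unfolding A_def by (simp add: exp_bind finite_multinom fincell)
  also have "\<dots> = measure_pmf.expectation (multinom_pmf (cell_pmf k n un) m) (\<lambda>C. \<Prod>j\<le>k. z j ^ C j)"
    using pw by simp
  also have "\<dots> = (measure_pmf.expectation (cell_pmf k n un) z) ^ m"
    by (rule exp_multinom[OF set_cell[OF assms(1,2)] fincell])
  also have "\<dots> = (\<Sum>j\<le>k. pj k n un j * z j) ^ m"
    by (simp add: exp_cell[OF assms(1,2)])
  finally show ?thesis unfolding z_def A_def .
qed

lemma chainT:
  assumes "un \<le> n" "k \<le> n" "2 \<le> r" "r \<le> k"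
    and q: "\<And>t j. t < T \<Longrightarrow> j \<in> {k-r+2..k} \<Longrightarrow> 0 \<le> real j / Nt n un t \<and> real j / Nt n un t \<le> 1"
    and xA: "x (k-r+1) = exp (lam * real (k-r+1))"
  shows "measure_pmf.expectation (chain_pmf k r n un m T) (Fx lam (k-r+1) k x)
     = exp (-lam * real T) * measure_pmf.expectation (chain_pmf k r n un m 0)
          (Fx lam (k-r+1) k (Hh (k-r+1) k (\<lambda>t j. real j / Nt n un t) 0 T x))"
  using q xA
proof (induction T arbitrary: x)
  case 0
  then show ?case by simp
next
  case (Suc T)
  define qf where "qf = (\<lambda>t j. real j / Nt n un t)"
  have fin: "finite (set_pmf (chain_pmf k r n un m T))"
    by (rule finite_chain[OF assms(1,2)]) (use Suc.prems in auto)
  have "measure_pmf.expectation (chain_pmf k r n un m (Suc T)) (Fx lam (k-r+1) k x)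
     = exp (-lam) * measure_pmf.expectation (chain_pmf k r n un m T)
          (Fx lam (k-r+1) k (stp (k-r+1) k (qf T) x))"
    unfolding qf_def by (rule chain_step[where t=T]) (use assms Suc.prems fin in auto)
  also have "\<dots> = exp (-lam) * (exp (-lam * real T) * measure_pmf.expectation (chain_pmf k r n un m 0)
          (Fx lam (k-r+1) k (Hh (k-r+1) k qf 0 T (stp (k-r+1) k (qf T) x))))"
    using Suc.IH[of "stp (k-r+1) k (qf T) x"] Suc.prems by (simp add: stp_A qf_def)
  also have "Hh (k-r+1) k qf 0 T (stp (k-r+1) k (qf T) x) = Hh (k-r+1) k qf 0 (Suc T) x"
    using Hh_Suc'[of "k-r+1" k qf 0 T x] by simp
  finally show ?case unfolding qf_def by (simp add: algebra_simps flip: exp_add)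
qed

lemma exact:
  assumes "un \<le> n" "k \<le> n" "2 \<le> r" "r \<le> k"
    and q: "\<And>t j. t < T \<Longrightarrow> j \<in> {k-r+2..k} \<Longrightarrow> 0 \<le> real j / Nt n un t \<and> real j / Nt n un t \<le> 1"
  shows "measure_pmf.expectation (chain_pmf k r n un m T) (\<lambda>(E, C). exp (lam * real_of_int E))
     = exp (-lam * real T) * (\<Sum>j\<le>k. pj k n un j * (if j \<le> k-r+1 then exp (lam * real j)
        else Hh (k-r+1) k (\<lambda>t j. real j / Nt n un t) 0 T
           (\<lambda>j. if j = k-r+1 then exp (lam * real (k-r+1)) else 1) j)) ^ m"
proof -
  let ?x0 = "(\<lambda>j. if j = k-r+1 then exp (lam * real (k-r+1)) else 1)"
  have F: "Fx lam (k-r+1) k ?x0 = (\<lambda>(E, C). exp (lam * real_of_int E))"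
    unfolding Fx_def  by (auto intro!: ext prod.neutral)
  have "measure_pmf.expectation (chain_pmf k r n un m T) (Fx lam (k-r+1) k ?x0)
     = exp (-lam * real T) * measure_pmf.expectation (chain_pmf k r n un m 0)
          (Fx lam (k-r+1) k (Hh (k-r+1) k (\<lambda>t j. real j / Nt n un t) 0 T ?x0))"
    by (rule chainT) (use assms in \<open>auto\<close>)
  also have "measure_pmf.expectation (chain_pmf k r n un m 0)
          (Fx lam (k-r+1) k (Hh (k-r+1) k (\<lambda>t j. real j / Nt n un t) 0 T ?x0))
      = (\<Sum>j\<le>k. pj k n un j * (if j \<le> k-r+1 then exp (lam * real j)
          else Hh (k-r+1) k (\<lambda>t j. real j / Nt n un t) 0 T ?x0 j)) ^ m"
    by (rule chain0) (use assms in auto)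
  finally have X: "measure_pmf.expectation (chain_pmf k r n un m T) (Fx lam (k-r+1) k ?x0)
     = exp (-lam * real T) * (\<Sum>j\<le>k. pj k n un j * (if j \<le> k-r+1 then exp (lam * real j)
          else Hh (k-r+1) k (\<lambda>t j. real j / Nt n un t) 0 T ?x0 j)) ^ m" .
  show ?thesis using X unfolding F by (simp only: mult_minus_left)

qed


fun Yit :: "nat \<Rightarrow> nat \<Rightarrow> (nat \<Rightarrow> nat \<Rightarrow> real) \<Rightarrow> (nat \<Rightarrow> real) \<Rightarrow> nat \<Rightarrow> nat \<Rightarrow> real" where
  "Yit A k q x0 0 = x0"
| "Yit A k q x0 (Suc s) = stp A k (q s) (Yit A k q x0 s)"

lemma Hh_Yit: "s \<le> T \<Longrightarrow> Hh A k qf (T - s) s x0 = Yit A k (\<lambda>s. qf (T - Suc s)) x0 s"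
proof (induction s)
  case 0 then show ?case by simp
next
  case (Suc s)
  have "Suc (T - Suc s) = T - s" using Suc.prems by simp
  then show ?case using Suc by simp
qed

lemma Yit_A: "Yit A k q x0 s A = x0 A"
  by (induction s) (auto simp: stp_A)

definition hyp :: "nat \<Rightarrow> nat \<Rightarrow> real \<Rightarrow> nat \<Rightarrow> real \<Rightarrow> (nat \<Rightarrow> nat \<Rightarrow> real) \<Rightarrow> (nat \<Rightarrow> real) \<Rightarrow> real \<Rightarrow> bool" where
  "hyp A k nn T eta q x0 ya \<longleftrightarrow> 0 < nn \<and> 1 \<le> T \<and> real T \<le> nn \<and> 0 \<le> eta \<and> x0 A = ya \<and>
     (\<forall>j. A < j \<and> j \<le> k \<longrightarrow> x0 j = 1) \<and>
     (\<forall>s<T. \<forall>j. A < j \<and> j \<le> k \<longrightarrow> \<bar>q s j\<bar> \<le> 2 * real j / nn \<and> \<bar>q s j - real j / nn\<bar> \<le> real j * eta / nn)"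

definition Lf :: "nat \<Rightarrow> real \<Rightarrow> real \<Rightarrow> nat \<Rightarrow> nat \<Rightarrow> real" where
  "Lf A ya nn e s = (ya - 1) * (fact (A + e) / fact A) * real (s choose e) / nn ^ e"

lemma Lf_rec: "nn > 0 \<Longrightarrow> Lf A ya nn (Suc e) (Suc s) - Lf A ya nn (Suc e) s = real (A + Suc e) / nn * Lf A ya nn e s"
  by (simp add: Lf_def field_simps)

lemma Yit_rec:
  assumes "A < d" "d \<le> k"
  shows "Yit A k q x0 (Suc s) d - 1 = (Yit A k q x0 s d - 1) + q s d * (Yit A k q x0 s (d-1) - 1) * (1 + (Yit A k q x0 s d - 1))"
  using assms by (simp add: stp_def algebra_simps)


lemma tri_aux: "\<bar>(w::real) + x * (1 + w)\<bar> \<le> \<bar>w\<bar> + \<bar>x\<bar> * (1 + \<bar>w\<bar>)"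
proof -
  have "\<bar>x * (1 + w)\<bar> = \<bar>x\<bar> * \<bar>1 + w\<bar>" by (simp add: abs_mult)
  also have "\<dots> \<le> \<bar>x\<bar> * (1 + \<bar>w\<bar>)" by (intro mult_left_mono) auto
  finally show ?thesis using abs_triangle_ineq[of w "x * (1 + w)"] by linarith
qed

lemma W_step:
  assumes H: "hyp A k nn T eta q x0 ya" and dk: "A + Suc e \<le> k"
    and B0: "0 \<le> B" and K0: "0 \<le> K"
    and IH: "\<And>s. s \<le> T \<Longrightarrow> \<bar>Yit A k q x0 s (A+e) - 1\<bar> \<le> B * (T/nn)^e"
    and IH2: "\<And>s. s \<le> T \<Longrightarrow> \<bar>Yit A k q x0 s (A+e) - 1 - Lf A ya nn e s\<bar>
                 \<le> real s * K * (T/nn)^e * (eta + T/nn + 1/T) / T"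
  defines "d \<equiv> real (A + Suc e)"
  defines "B' \<equiv> 2 * d * B * exp (2 * d * B)"
  defines "K' \<equiv> d * (B * (1 + B') + B * B' + K)"
  shows "\<And>s. s \<le> T \<Longrightarrow> \<bar>Yit A k q x0 s (A + Suc e) - 1\<bar> \<le> B' * (T/nn)^Suc e"
    and "\<And>s. s \<le> T \<Longrightarrow> \<bar>Yit A k q x0 s (A + Suc e) - 1 - Lf A ya nn (Suc e) s\<bar>
                 \<le> real s * K' * (T/nn)^Suc e * (eta + T/nn + 1/T) / T"
proof -
  from H have nn: "0 < nn" and T1: "1 \<le> T" and Tn: "real T \<le> nn" and eta: "0 \<le> eta"
    and x0: "x0 (A + Suc e) = 1"
    using dk unfolding hyp_def d_def by auto
  have hq: "\<forall>s<T. \<forall>j. A < j \<and> j \<le> k \<longrightarrow> \<bar>q s j\<bar> \<le> 2 * real j / nn \<and> \<bar>q s j - real j / nn\<bar> \<le> real j * eta / nn"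
    using H unfolding hyp_def by blast
  have Ad: "A < A + Suc e" by simp
  have qb: "\<bar>q s (A + Suc e)\<bar> \<le> 2 * d / nn" if "s < T" for s
    using hq[rule_format, OF that, of "A + Suc e", OF conjI[OF Ad dk]] unfolding d_def by blast
  have qd: "\<bar>q s (A + Suc e) - d / nn\<bar> \<le> d * eta / nn" if "s < T" for s
    using hq[rule_format, OF that, of "A + Suc e", OF conjI[OF Ad dk]] unfolding d_def by blast
  define \<rho> where "\<rho> = real T / nn"
  have \<rho>0: "0 < \<rho>" and \<rho>1: "\<rho> \<le> 1" using nn T1 Tn unfolding \<rho>_def by auto
  have Tpos: "real T > 0" using T1 by simp
  have d0: "0 < d" unfolding d_def by simp
  define W where "W s = Yit A k q x0 s (A + Suc e) - 1" for s
  define V where "V s = Yit A k q x0 s (A + e) - 1" for s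
  have rec: "W (Suc s) = W s + q s (A + Suc e) * V s * (1 + W s)" for s
    unfolding W_def V_def using Yit_rec[of A "A + Suc e" k q x0 s] dk by simp
  have W0: "W 0 = 0" unfolding W_def using x0 by simp
  define a where "a = 2 * d / nn * (B * \<rho>^e)"
  have a0: "0 \<le> a" unfolding a_def using d0 nn B0 \<rho>0 by simp
  have qV: "\<bar>q s (A + Suc e) * V s\<bar> \<le> a" if "s < T" for s
  proof -
    have "\<bar>q s (A + Suc e) * V s\<bar> = \<bar>q s (A + Suc e)\<bar> * \<bar>V s\<bar>" by (simp add: abs_mult)
    also have "\<dots> \<le> 2 * d / nn * (B * \<rho>^e)"
      by (intro mult_mono qb that) (use IH[of s] that d0 nn in \<open>auto simp: V_def \<rho>_def\<close>)
    finally show ?thesis unfolding a_def .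
  qed
  have st1: "1 + \<bar>W s\<bar> \<le> (1 + a) ^ s" if "s \<le> T" for s
    using that
  proof (induction s)
    case 0 then show ?case using W0 by simp
  next
    case (Suc s)
    have "\<bar>W (Suc s)\<bar> \<le> \<bar>W s\<bar> + \<bar>q s (A + Suc e) * V s\<bar> * (1 + \<bar>W s\<bar>)"
      unfolding rec by (rule tri_aux)
    also have "\<dots> \<le> \<bar>W s\<bar> + a * (1 + \<bar>W s\<bar>)"
      using qV[of s] Suc.prems by (intro add_left_mono mult_right_mono) auto
    finally have "1 + \<bar>W (Suc s)\<bar> \<le> (1 + \<bar>W s\<bar>) * (1 + a)" by (simp add: algebra_simps)
    also have "\<dots> \<le> (1 + a) ^ s * (1 + a)"
      using Suc a0 by (intro mult_right_mono) auto
    finally show ?case by (simp add: mult.commute)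
  qed
  define M where "M = exp (2 * d * B)"
  have aT: "a * real T = 2 * d * B * \<rho> ^ Suc e"
    unfolding a_def \<rho>_def using nn by (simp add: field_simps)
  have \<rho>pow: "\<rho> ^ Suc e \<le> 1" by (intro power_le_one) (use \<rho>0 \<rho>1 in auto)
  have st2: "1 + \<bar>W s\<bar> \<le> M" if "s \<le> T" for s
  proof -
    have "(1 + a) ^ s \<le> exp a ^ s"
      using a0 by (intro power_mono) (auto simp: exp_ge_add_one_self)
    also have "\<dots> = exp (a * real s)" by (simp add: exp_of_nat_mult[symmetric] mult.commute)
    also have "\<dots> \<le> exp (a * real T)" using that a0 by (simp add: mult_left_mono)
    also have "\<dots> \<le> M" unfolding M_def aT using \<rho>pow d0 B0
      by (simp add: mult_left_le)
    finally show ?thesis using st1[OF that] by simp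
  qed
  have st3: "\<bar>W s\<bar> \<le> real s * a * M" if "s \<le> T" for s
    using that
  proof (induction s)
    case 0 then show ?case using W0 by simp
  next
    case (Suc s)
    have "\<bar>W (Suc s)\<bar> \<le> \<bar>W s\<bar> + \<bar>q s (A + Suc e) * V s\<bar> * (1 + \<bar>W s\<bar>)"
      unfolding rec by (rule tri_aux)
    also have "\<dots> \<le> real s * a * M + a * M"
      using Suc qV[of s] st2[of s] a0 by (intro add_mono mult_mono) auto
    finally show ?case by (simp add: algebra_simps)
  qed
  have WB: "\<bar>W s\<bar> \<le> B' * \<rho> ^ Suc e" if "s \<le> T" for s
  proof -
    have "\<bar>W s\<bar> \<le> real T * a * M"
    proof -
      have "real s * a \<le> real T * a" using that a0 by (intro mult_right_mono) auto
      hence "real s * a * M \<le> real T * a * M" using mult_right_mono[of "real s * a" "real T * a" M] unfolding M_def by simp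
      thus ?thesis using st3[OF that] by linarith
    qed
    also have "\<dots> = B' * \<rho> ^ Suc e" unfolding B'_def M_def using aT by (simp add: algebra_simps)
    finally show ?thesis .
  qed
  show "\<And>s. s \<le> T \<Longrightarrow> \<bar>Yit A k q x0 s (A + Suc e) - 1\<bar> \<le> B' * (T/nn)^Suc e"
    using WB unfolding W_def \<rho>_def by simp
  define X where "X = eta + \<rho> + 1 / real T"
  have X0: "0 \<le> X" unfolding X_def using eta \<rho>0 by simp
  have etaX: "eta \<le> X" and \<rho>X: "\<rho> \<le> X" unfolding X_def using eta \<rho>0 Tpos by auto
  have \<rho>e1: "\<rho> ^ e \<le> 1" by (intro power_le_one) (use \<rho>0 \<rho>1 in auto)
  have \<rho>e0: "0 \<le> \<rho> ^ e" using \<rho>0 by simp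
  have B'0: "0 \<le> B'" unfolding B'_def using d0 B0 by simp
  define D where "D s = W s - Lf A ya nn (Suc e) s" for s
  have D0: "D 0 = 0" unfolding D_def using W0 by (simp add: Lf_def)
  have Drec: "D (Suc s) - D s = (q s (A + Suc e) - d / nn) * V s * (1 + W s) + d / nn * V s * W s
      + d / nn * (V s - Lf A ya nn e s)" for s
    unfolding D_def using rec[of s] Lf_rec[OF nn, of A ya e s] nn unfolding d_def by (simp add: field_simps)
  define P where "P = K' * \<rho> ^ Suc e * X / real T"
  have Pstep: "\<bar>D (Suc s) - D s\<bar> \<le> P" if s: "s < T" for s
  proof -
    have Vb: "\<bar>V s\<bar> \<le> B * \<rho> ^ e" using IH[of s] s unfolding V_def \<rho>_def by simp
    have Wb: "\<bar>W s\<bar> \<le> B' * \<rho> ^ Suc e" using WB[of s] s by simp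
    have Wb1: "\<bar>1 + W s\<bar> \<le> 1 + B'"
    proof -
      have "B' * \<rho> ^ Suc e \<le> B' * 1" using B'0 \<rho>pow by (intro mult_left_mono) auto
      thus ?thesis using Wb by linarith
    qed
    have Wb2: "\<bar>W s\<bar> \<le> B' * \<rho>"
    proof -
      have "B' * \<rho> ^ Suc e = (B' * \<rho>) * \<rho> ^ e" by simp
      also have "\<dots> \<le> (B' * \<rho>) * 1" using B'0 \<rho>0 \<rho>e1 by (intro mult_left_mono) auto
      finally show ?thesis using Wb by linarith
    qed
    have t1: "\<bar>(q s (A + Suc e) - d / nn) * V s * (1 + W s)\<bar> \<le> (d * eta / nn) * (B * \<rho> ^ e) * (1 + B')"
      unfolding abs_mult
      by (intro mult_mono qd s Vb Wb1) (use d0 nn eta B0 \<rho>e0 in auto)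
    have t2: "\<bar>d / nn * V s * W s\<bar> \<le> d / nn * (B * \<rho> ^ e) * (B' * \<rho>)"
      unfolding abs_mult using d0 nn
      by (intro mult_mono Vb Wb2) (use d0 nn B0 \<rho>e0 in auto)
    have IH2s: "\<bar>V s - Lf A ya nn e s\<bar> \<le> K * \<rho> ^ e * X"
    proof -
      have "\<bar>V s - Lf A ya nn e s\<bar> \<le> real s * K * \<rho> ^ e * X / real T"
        using IH2[of s] s unfolding V_def \<rho>_def X_def by simp
      also have "\<dots> \<le> real T * (K * \<rho> ^ e * X) / real T"
        using s K0 \<rho>e0 X0 Tpos by (intro divide_right_mono) (auto simp: mult.assoc intro!: mult_right_mono)
      also have "\<dots> = K * \<rho> ^ e * X" using Tpos by simp
      finally show ?thesis .
    qed
    have t3: "\<bar>d / nn * (V s - Lf A ya nn e s)\<bar> \<le> d / nn * (K * \<rho> ^ e * X)"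
    proof -
      have "\<bar>d / nn\<bar> = d / nn" using d0 nn by simp
      moreover have "d / nn * \<bar>V s - Lf A ya nn e s\<bar> \<le> d / nn * (K * \<rho> ^ e * X)"
        using d0 nn IH2s by (intro mult_left_mono) auto
      ultimately show ?thesis unfolding abs_mult by simp
    qed
    have "\<bar>D (Suc s) - D s\<bar> \<le> (d * eta / nn) * (B * \<rho> ^ e) * (1 + B') + d / nn * (B * \<rho> ^ e) * (B' * \<rho>)
        + d / nn * (K * \<rho> ^ e * X)"
    proof -
      let ?a = "(q s (A + Suc e) - d / nn) * V s * (1 + W s)"
      let ?b = "d / nn * V s * W s"
      let ?c = "d / nn * (V s - Lf A ya nn e s)"
      have "\<bar>?a + ?b + ?c\<bar> \<le> \<bar>?a\<bar> + \<bar>?b\<bar> + \<bar>?c\<bar>"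
        using abs_triangle_ineq[of "?a + ?b" ?c] abs_triangle_ineq[of ?a ?b] by linarith
      moreover have "\<bar>?a\<bar> + \<bar>?b\<bar> + \<bar>?c\<bar> \<le> (d * eta / nn) * (B * \<rho> ^ e) * (1 + B') + d / nn * (B * \<rho> ^ e) * (B' * \<rho>)
        + d / nn * (K * \<rho> ^ e * X)" by (intro add_mono t1 t2 t3)
      ultimately show ?thesis unfolding Drec by (rule order.trans)
    qed
    also have "\<dots> = d / nn * \<rho> ^ e * (B * (1 + B') * eta + B * B' * \<rho> + K * X)"
      by (simp add: algebra_simps add_divide_distrib)
    also have "\<dots> \<le> d / nn * \<rho> ^ e * ((B * (1 + B') + B * B' + K) * X)"
    proof (intro mult_left_mono)
      have "B * (1 + B') * eta \<le> B * (1 + B') * X" using B0 B'0 etaX by (intro mult_left_mono) auto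
      moreover have "B * B' * \<rho> \<le> B * B' * X" using B0 B'0 \<rho>X by (intro mult_left_mono) auto
      ultimately show "B * (1 + B') * eta + B * B' * \<rho> + K * X \<le> (B * (1 + B') + B * B' + K) * X"
        by (simp add: algebra_simps)
    qed (use d0 nn \<rho>e0 in auto)
    also have "\<dots> = P"
      unfolding P_def K'_def \<rho>_def using nn Tpos by (simp add: field_simps)
    finally show ?thesis .
  qed
  have Dall: "\<bar>D s\<bar> \<le> real s * P" if "s \<le> T" for s
    using that
  proof (induction s)
    case 0 then show ?case using D0 by simp
  next
    case (Suc s)
    have "\<bar>D (Suc s)\<bar> \<le> \<bar>D s\<bar> + \<bar>D (Suc s) - D s\<bar>" by linarith
    also have "\<dots> \<le> real s * P + P" using Suc Pstep[of s] by (intro add_mono) auto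
    finally show ?case by (simp add: algebra_simps)
  qed
  show "\<And>s. s \<le> T \<Longrightarrow> \<bar>Yit A k q x0 s (A + Suc e) - 1 - Lf A ya nn (Suc e) s\<bar>
                 \<le> real s * K' * (T/nn)^Suc e * (eta + T/nn + 1/T) / T"
  proof -
    fix s assume s: "s \<le> T"
    have "\<bar>D s\<bar> \<le> real s * P" by (rule Dall[OF s])
    also have "real s * P = real s * K' * (T/nn)^Suc e * (eta + T/nn + 1/T) / T"
      unfolding P_def X_def \<rho>_def by (simp only: mult.assoc times_divide_eq_right)
    finally show "\<bar>Yit A k q x0 s (A + Suc e) - 1 - Lf A ya nn (Suc e) s\<bar>
                 \<le> real s * K' * (T/nn)^Suc e * (eta + T/nn + 1/T) / T"
      unfolding D_def W_def .
  qed
qed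


lemma W_bounds:
  "A + e \<le> k \<Longrightarrow> \<exists>B K. 0 \<le> B \<and> 0 \<le> K \<and> (\<forall>nn T eta q x0 s. hyp A k nn T eta q x0 ya \<longrightarrow> s \<le> T \<longrightarrow>
     \<bar>Yit A k q x0 s (A+e) - 1\<bar> \<le> B * (T/nn)^e \<and>
     \<bar>Yit A k q x0 s (A+e) - 1 - Lf A ya nn e s\<bar> \<le> real s * K * (T/nn)^e * (eta + T/nn + 1/T) / T)"
proof (induction e)
  case 0
  have Y: "hyp A k nn T eta q x0 ya \<Longrightarrow> Yit A k q x0 s A = ya" for nn T eta q x0 s
    by (simp add: Yit_A hyp_def)
  show ?case by (rule exI[of _ "\<bar>ya-1\<bar>"], rule exI[of _ 0]) (auto simp: Y Lf_def)
next
  case (Suc e)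
  then obtain B K where BK: "0 \<le> B" "0 \<le> K" and H: "\<And>nn T eta q x0 s. hyp A k nn T eta q x0 ya \<Longrightarrow> s \<le> T \<Longrightarrow>
     \<bar>Yit A k q x0 s (A+e) - 1\<bar> \<le> B * (T/nn)^e \<and>
     \<bar>Yit A k q x0 s (A+e) - 1 - Lf A ya nn e s\<bar> \<le> real s * K * (T/nn)^e * (eta + T/nn + 1/T) / T"
    by auto
  define d where "d = real (A + Suc e)"
  define B' where "B' = 2 * d * B * exp (2 * d * B)"
  define K' where "K' = d * (B * (1 + B') + B * B' + K)"
  have B'0: "0 \<le> B'" unfolding B'_def d_def using BK by simp
  have K'0: "0 \<le> K'" unfolding K'_def d_def using BK B'0 by simp
  have main: "\<forall>nn T eta q x0 s. hyp A k nn T eta q x0 ya \<longrightarrow> s \<le> T \<longrightarrow>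
     \<bar>Yit A k q x0 s (A + Suc e) - 1\<bar> \<le> B' * (T/nn)^Suc e \<and>
     \<bar>Yit A k q x0 s (A + Suc e) - 1 - Lf A ya nn (Suc e) s\<bar> \<le> real s * K' * (T/nn)^Suc e * (eta + T/nn + 1/T) / T"
  proof (intro allI impI conjI)
    fix nn T eta q x0 s assume h: "hyp A k nn T eta q x0 ya" and s: "s \<le> T"
    have i1: "\<And>s. s \<le> T \<Longrightarrow> \<bar>Yit A k q x0 s (A+e) - 1\<bar> \<le> B * (T/nn)^e" using H[OF h] by blast
    have i2: "\<And>s. s \<le> T \<Longrightarrow> \<bar>Yit A k q x0 s (A+e) - 1 - Lf A ya nn e s\<bar> \<le> real s * K * (T/nn)^e * (eta + T/nn + 1/T) / T"
      using H[OF h] by blast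
    show "\<bar>Yit A k q x0 s (A + Suc e) - 1\<bar> \<le> B' * (T/nn)^Suc e"
      unfolding B'_def d_def by (rule W_step(1)[OF h Suc.prems BK]) (use i1 i2 s in auto)
    show "\<bar>Yit A k q x0 s (A + Suc e) - 1 - Lf A ya nn (Suc e) s\<bar> \<le> real s * K' * (T/nn)^Suc e * (eta + T/nn + 1/T) / T"
      unfolding K'_def B'_def d_def by (rule W_step(2)[OF h Suc.prems BK]) (use i1 i2 s in auto)
  qed
  show ?case using main B'0 K'0 by blast
qed


definition rel :: "(nat \<Rightarrow> real) \<Rightarrow> (nat \<Rightarrow> real) \<Rightarrow> (nat \<Rightarrow> real) \<Rightarrow> bool" where
  "rel ep f g \<longleftrightarrow> (\<lambda>n. f n - g n) \<in> O(\<lambda>n. g n * ep n)"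

lemma zero_bigo: "(\<lambda>_. 0::real) \<in> O(g)"
  by (rule bigoI[of _ 0]) auto

lemma rel_refl: "rel ep f f"
  unfolding rel_def using zero_bigo by simp

lemma ep_bigo1: "ep \<longlonglongrightarrow> 0 \<Longrightarrow> ep \<in> O(\<lambda>_. 1::real)"
  by (rule bigoI_tendsto[where c=0]) auto

lemma rel_mult:
  assumes ep: "ep \<longlonglongrightarrow> 0" and 1: "rel ep f1 g1" and 2: "rel ep f2 g2"
  shows "rel ep (\<lambda>n. f1 n * f2 n) (\<lambda>n. g1 n * g2 n)"
proof -
  have e1: "ep \<in> O(\<lambda>_. 1)" by (rule ep_bigo1[OF ep])
  have a: "(\<lambda>n. (f1 n - g1 n) * (f2 n - g2 n)) \<in> O(\<lambda>n. g1 n * g2 n * ep n)"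
  proof -
    have "(\<lambda>n. (f1 n - g1 n) * (f2 n - g2 n)) \<in> O(\<lambda>n. (g1 n * ep n) * (g2 n * ep n))"
      using 1 2 unfolding rel_def by (rule landau_o.big.mult)
    also have "(\<lambda>n. (g1 n * ep n) * (g2 n * ep n)) \<in> O(\<lambda>n. (g1 n * g2 n * ep n) * 1)"
    proof -
      have "(\<lambda>n. (g1 n * g2 n * ep n) * ep n) \<in> O(\<lambda>n. (g1 n * g2 n * ep n) * 1)"
        by (rule landau_o.big.mult[OF _ e1]) simp
      thus ?thesis by (simp add: algebra_simps)
    qed
    finally show ?thesis by simp
  qed
  have b: "(\<lambda>n. (f1 n - g1 n) * g2 n) \<in> O(\<lambda>n. g1 n * g2 n * ep n)"
  proof -
    have "(\<lambda>n. (f1 n - g1 n) * g2 n) \<in> O(\<lambda>n. (g1 n * ep n) * g2 n)"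
      using 1 unfolding rel_def by (rule landau_o.big.mult_right)
    thus ?thesis by (simp add: algebra_simps)
  qed
  have c: "(\<lambda>n. g1 n * (f2 n - g2 n)) \<in> O(\<lambda>n. g1 n * g2 n * ep n)"
  proof -
    have "(\<lambda>n. g1 n * (f2 n - g2 n)) \<in> O(\<lambda>n. g1 n * (g2 n * ep n))"
      using 2 unfolding rel_def by (rule landau_o.big.mult_left)
    thus ?thesis by (simp add: algebra_simps)
  qed
  have "(\<lambda>n. (f1 n - g1 n) * (f2 n - g2 n) + (f1 n - g1 n) * g2 n + g1 n * (f2 n - g2 n))
        \<in> O(\<lambda>n. g1 n * g2 n * ep n)"
    by (intro sum_in_bigo a b c)
  moreover have "(\<lambda>n. (f1 n - g1 n) * (f2 n - g2 n) + (f1 n - g1 n) * g2 n + g1 n * (f2 n - g2 n))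
      = (\<lambda>n. f1 n * f2 n - g1 n * g2 n)"
    by (simp add: algebra_simps)
  ultimately show ?thesis unfolding rel_def by simp
qed

lemma rel_cmult: "rel ep f g \<Longrightarrow> rel ep (\<lambda>n. c * f n) (\<lambda>n. c * g n)"
  unfolding rel_def
proof -
  assume "(\<lambda>n. f n - g n) \<in> O(\<lambda>n. g n * ep n)"
  hence "(\<lambda>n. c * (f n - g n)) \<in> O(\<lambda>n. c * (g n * ep n))" by (rule landau_o.big.mult_left)
  thus "(\<lambda>n. c * f n - c * g n) \<in> O(\<lambda>n. c * g n * ep n)" by (simp add: algebra_simps)
qed

lemma rel_cong:
  assumes "eventually (\<lambda>n. f n = f' n) sequentially" "eventually (\<lambda>n. g n = g' n) sequentially"
    and "rel ep f g"
  shows "rel ep f' g'"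
proof -
  have "(\<lambda>n. f n - g n) \<in> O(\<lambda>n. g n * ep n)" using assms(3) unfolding rel_def .
  moreover have "eventually (\<lambda>n. f n - g n = f' n - g' n) sequentially"
    using assms(1,2) by eventually_elim simp
  moreover have "eventually (\<lambda>n. g n * ep n = g' n * ep n) sequentially"
    using assms(2) by eventually_elim simp
  ultimately show ?thesis unfolding rel_def
    using landau_o.big.in_cong landau_o.big.cong by metis
qed

lemma rel_prod:
  assumes ep: "ep \<longlonglongrightarrow> 0" and "finite I" and "\<And>i. i \<in> I \<Longrightarrow> rel ep (f i) (g i)"
  shows "rel ep (\<lambda>n. \<Prod>i\<in>I. f i n) (\<lambda>n. \<Prod>i\<in>I. g i n)"
  using assms(2,3)
proof (induction I rule: finite_induct)
  case empty
  then show ?case by (simp add: rel_refl)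
next
  case (insert x F)
  have "rel ep (\<lambda>n. f x n * (\<Prod>i\<in>F. f i n)) (\<lambda>n. g x n * (\<Prod>i\<in>F. g i n))"
    using insert by (intro rel_mult[OF ep]) auto
  thus ?case using insert by simp
qed

lemma rel_pow:
  assumes ep: "ep \<longlonglongrightarrow> 0" and "rel ep f g"
  shows "rel ep (\<lambda>n. f n ^ j) (\<lambda>n. g n ^ j)"
  using rel_prod[OF ep, of "{..<j}" "\<lambda>_. f" "\<lambda>_. g"] assms by simp

lemma rel_bigo:
  assumes ep: "ep \<longlonglongrightarrow> 0" and "rel ep f g"
  shows "f \<in> O(g)"
proof -
  have "(\<lambda>n. f n - g n) \<in> O(\<lambda>n. g n * ep n)" using assms(2) unfolding rel_def .
  also have "(\<lambda>n. g n * ep n) \<in> O(\<lambda>n. g n * 1)"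
    by (rule landau_o.big.mult_left[OF ep_bigo1[OF ep]])
  finally have "(\<lambda>n. f n - g n) \<in> O(g)" by simp
  hence "(\<lambda>n. (f n - g n) + g n) \<in> O(g)" by (rule sum_in_bigo(1)) (rule landau_o.big_refl)
  thus ?thesis by simp
qed

lemma rel_inv:
  assumes ep: "ep \<longlonglongrightarrow> 0" and g0: "eventually (\<lambda>n. g n \<noteq> 0) sequentially" and r: "rel ep f g"
  shows "rel ep (\<lambda>n. 1 / f n) (\<lambda>n. 1 / g n)"
proof -
  obtain c where c: "c > 0" and ev: "eventually (\<lambda>n. norm (f n - g n) \<le> c * norm (g n * ep n)) sequentially"
    using r unfolding rel_def by (elim landau_o.bigE) auto
  have "eventually (\<lambda>n. \<bar>ep n\<bar> < 1 / (2 * c)) sequentially"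
    using ep c by (intro order_tendstoD) (auto simp: tendsto_rabs_zero_iff intro: tendsto_rabs_zero)
  hence "eventually (\<lambda>n. \<bar>ep n\<bar> < 1 / (2 * c)) sequentially"
    using ep c unfolding LIMSEQ_iff_nz
    by auto
  moreover note ev g0
  ultimately have "eventually (\<lambda>n. norm (1 / f n - 1 / g n) \<le> (2 * c) * norm (1 / g n * ep n)) sequentially"
  proof eventually_elim
    case (elim n)
    have ce: "c * \<bar>ep n\<bar> \<le> 1/2" using elim(1) c by (simp add: field_simps)
    have fg: "\<bar>f n - g n\<bar> \<le> c * \<bar>g n\<bar> * \<bar>ep n\<bar>" using elim(2) by (simp add: abs_mult mult.assoc)
    also have "\<dots> = \<bar>g n\<bar> * (c * \<bar>ep n\<bar>)" by simp
    also have "\<dots> \<le> \<bar>g n\<bar> * (1/2)" by (rule mult_left_mono[OF ce]) simp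
    finally have fg2: "\<bar>f n - g n\<bar> \<le> \<bar>g n\<bar> / 2" by simp
    hence fge: "\<bar>f n\<bar> \<ge> \<bar>g n\<bar> / 2" by linarith
    have gp: "\<bar>g n\<bar> > 0" using elim(3) by simp
    hence fp: "\<bar>f n\<bar> > 0" using fge by linarith
    have "norm (1 / f n - 1 / g n) = \<bar>f n - g n\<bar> / (\<bar>f n\<bar> * \<bar>g n\<bar>)"
      using gp fp by (simp add: field_simps abs_mult flip: abs_minus_commute)
    also have "\<dots> \<le> (c * \<bar>g n\<bar> * \<bar>ep n\<bar>) / ((\<bar>g n\<bar> / 2) * \<bar>g n\<bar>)"
    proof (rule frac_le)
      show "0 < \<bar>g n\<bar> / 2 * \<bar>g n\<bar>" using gp by (auto simp: zero_less_mult_iff linorder_neq_iff)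
      show "\<bar>g n\<bar> / 2 * \<bar>g n\<bar> \<le> \<bar>f n\<bar> * \<bar>g n\<bar>" using fge by (intro mult_right_mono) auto
    qed (use fg c in auto)
    also have "\<dots> = (2 * c) * norm (1 / g n * ep n)"
      using gp by (simp add: field_simps abs_mult)
    finally show ?case .
  qed
  hence "(\<lambda>n. 1 / f n - 1 / g n) \<in> O(\<lambda>n. 1 / g n * ep n)" by (rule bigoI)
  thus ?thesis unfolding rel_def .
qed

lemma rel_diff_bigo:
  assumes "rel ep f g" "g \<in> O(h)"
  shows "(\<lambda>n. f n - g n) \<in> O(\<lambda>n. h n * ep n)"
proof -
  have "(\<lambda>n. f n - g n) \<in> O(\<lambda>n. g n * ep n)" using assms(1) unfolding rel_def .
  also have "(\<lambda>n. g n * ep n) \<in> O(\<lambda>n. h n * ep n)" by (rule landau_o.big.mult_right[OF assms(2)])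
  finally show ?thesis .
qed

lemma relI_bound:
  assumes "eventually (\<lambda>n. \<bar>f n - g n\<bar> \<le> c * \<bar>g n * ep n\<bar>) sequentially"
  shows "rel ep f g"
  unfolding rel_def by (rule bigoI[of _ c]) (use assms in simp)


lemma choose_prod: "real (a choose j) = (\<Prod>i<j. real a - real i) / fact j"
  by (simp add: binomial_gbinomial gbinomial_prod_rev atLeast0LessThan)

lemma real_n_big: "eventually (\<lambda>n. c \<le> real n) sequentially"
proof -
  have "eventually (\<lambda>n. nat \<lceil>c\<rceil> \<le> n) sequentially" by (rule eventually_ge_at_top)
  thus ?thesis by eventually_elim linarith
qed

locale setting =
  fixes k r :: nat and u :: "nat \<Rightarrow> nat" and \<mu> \<tau> lam :: real and m :: "nat \<Rightarrow> nat"
  assumes r2: "2 \<le> r" and rk: "r \<le> k"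
    and ut: "filterlim u at_top sequentially"
    and un: "(\<lambda>n. real (u n) / real n) \<longlonglongrightarrow> 0"
    and \<mu>0: "\<mu> > 0" and \<tau>0: "\<tau> > 0"
    and mdef: "\<And>n. m n = nat \<lfloor>\<mu> * real n ^ (r-1) / real (u n) ^ (r-2)\<rfloor>"
begin

definition "A = k - r + 1"
definition "U n = real (u n)"
definition "Tn n = nat \<lfloor>\<tau> * U n\<rfloor>"
definition "ep n = 1 / U n + U n / real n"
definition "ya = exp (lam * real A)"

definition good :: "nat \<Rightarrow> bool" where
  "good n \<longleftrightarrow> 1 \<le> U n \<and> 2 \<le> \<tau> * U n \<and> 2 * (1 + \<tau>) * U n \<le> real n \<and> 2 * real k \<le> real n
     \<and> 1 \<le> real n \<and> 2 \<le> \<mu> * real n"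

lemma A1: "1 \<le> A" and Ak: "A \<le> k" and kA: "k - A = r - 1" and Ar: "A + (r - 1) = k"
  using r2 rk unfolding A_def by auto

lemma U_big: "eventually (\<lambda>n. c \<le> U n) sequentially"
proof -
  have "\<forall>Z. eventually (\<lambda>x. Z \<le> u x) sequentially"
    using ut by (simp add: filterlim_at_top)
  hence "eventually (\<lambda>n. nat \<lceil>c\<rceil> \<le> u n) sequentially" by blast
  thus ?thesis unfolding U_def by eventually_elim linarith
qed

lemma Un_small: "d > 0 \<Longrightarrow> eventually (\<lambda>n. U n / real n < d) sequentially"
  using un unfolding U_def by (rule order_tendstoD) 

lemma ev_good: "eventually good sequentially"
proof -
  have a: "eventually (\<lambda>n. max 1 (2 / \<tau>) \<le> U n) sequentially" by (rule U_big)
  have b: "eventually (\<lambda>n. U n / real n < 1 / (2 * (1 + \<tau>))) sequentially"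
    by (rule Un_small) (use \<tau>0 in simp)
  have c: "eventually (\<lambda>n. max (2 * real k) (max 1 (2 / \<mu>)) \<le> real n) sequentially"
    by (rule real_n_big)
  show ?thesis using a b c
  proof eventually_elim
    case (elim n)
    have n1: "1 \<le> real n" using elim(3) by simp
    have U1: "1 \<le> U n" using elim(1) by simp
    have "\<tau> * (2 / \<tau>) \<le> \<tau> * U n" using elim(1) \<tau>0 by (intro mult_left_mono) auto
    hence tU: "2 \<le> \<tau> * U n" using \<tau>0 by simp
    have "U n < real n / (2 * (1 + \<tau>))" using elim(2) n1 \<tau>0 by (simp add: field_simps)
    hence "2 * (1 + \<tau>) * U n \<le> real n" using \<tau>0 by (simp add: field_simps)
    moreover have "\<mu> * (2 / \<mu>) \<le> \<mu> * real n" using elim(3) \<mu>0 by (intro mult_left_mono) auto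
    ultimately show ?case unfolding good_def using n1 U1 tU elim(3) \<mu>0 by auto
  qed
qed

end

context setting begin

definition "x0 = (\<lambda>j. if j = A then ya else 1)"
definition "qq n s j = real j / Nt n (u n) (Tn n - Suc s)"
definition "eta n = 2 * (U n + real (Tn n)) / real n"

lemma good_facts:
  assumes g: "good n"
  shows "u n \<le> n" "k \<le> n" "0 < real n" "real (Tn n) \<le> \<tau> * U n" "\<tau> * U n - 1 < real (Tn n)"
    "1 \<le> Tn n" "\<tau> * U n / 2 \<le> real (Tn n)" "U n \<le> real n" "1 \<le> U n"
    "\<And>t. t < Tn n \<Longrightarrow> real n / 2 \<le> Nt n (u n) t"
    "\<And>t. t < Tn n \<Longrightarrow> real n - Nt n (u n) t \<le> U n + real (Tn n)"
    "2 * (1 + \<tau>) * U n \<le> real n"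
proof -
  from g have U1: "1 \<le> U n" and tU: "2 \<le> \<tau> * U n" and Un: "2 * (1 + \<tau>) * U n \<le> real n"
    and kn: "2 * real k \<le> real n" and n1: "1 \<le> real n" unfolding good_def by auto
  show "1 \<le> U n" "2 * (1 + \<tau>) * U n \<le> real n" by fact+
  have tU0: "0 \<le> \<tau> * U n" using U1 \<tau>0 by simp
  have "2 * (1 + \<tau>) * U n = 2 * U n + 2 * (\<tau> * U n)" by (simp add: algebra_simps)
  hence UU: "U n \<le> real n" using Un U1 tU0 by linarith
  show "U n \<le> real n" by fact
  show "u n \<le> n" using UU unfolding U_def by simp
  show "k \<le> n" using kn by simp
  show "0 < real n" using n1 by simp
  have fl: "real (Tn n) = of_int \<lfloor>\<tau> * U n\<rfloor>" unfolding Tn_def using tU by simp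
  show T1: "real (Tn n) \<le> \<tau> * U n" unfolding fl by simp
  show T2: "\<tau> * U n - 1 < real (Tn n)" unfolding fl by linarith
  show "1 \<le> Tn n" using T2 tU by simp
  show "\<tau> * U n / 2 \<le> real (Tn n)" using T2 tU by simp
  fix t assume t: "t < Tn n"
  have "real t \<le> real (Tn n)" using t by simp
  hence "real t \<le> \<tau> * U n" using T1 by simp
  have "real n - Nt n (u n) t = U n + real t" unfolding Nt_def U_def by simp
  thus "real n - Nt n (u n) t \<le> U n + real (Tn n)" using t by simp
  show "real n / 2 \<le> Nt n (u n) t"
    using \<open>real n - Nt n (u n) t = U n + real t\<close> \<open>real t \<le> \<tau> * U n\<close> Un U1 tU0
      \<open>2 * (1 + \<tau>) * U n = 2 * U n + 2 * (\<tau> * U n)\<close> by linarith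
qed

lemma good_hyp: assumes g: "good n" shows "hyp A k (real n) (Tn n) (eta n) (qq n) x0 ya"
proof -
  note f = good_facts[OF g]
  have Tn_le: "real (Tn n) \<le> real n"
  proof -
    have "\<tau> * U n \<le> 2 * (1 + \<tau>) * U n" using f(9) \<tau>0 by (simp add: algebra_simps)
    thus ?thesis using f(4) f(12) by linarith
  qed
  have qb: "\<bar>qq n s j\<bar> \<le> 2 * real j / real n \<and> \<bar>qq n s j - real j / real n\<bar> \<le> real j * eta n / real n"
    if s: "s < Tn n" for s j
  proof -
    define t where "t = Tn n - Suc s"
    have t: "t < Tn n" using s unfolding t_def by simp
    define N where "N = Nt n (u n) t"
    have N2: "real n / 2 \<le> N" and nN: "real n - N \<le> U n + real (Tn n)" using f(10,11)[OF t] unfolding N_def by auto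
    have N0: "0 < N" using N2 f(3) by linarith
    have q: "qq n s j = real j / N" unfolding qq_def N_def t_def by simp
    have "real j / N \<le> real j / (real n / 2)" using N2 f(3) by (intro divide_left_mono) auto
    hence a: "\<bar>qq n s j\<bar> \<le> 2 * real j / real n" unfolding q using N0 by (simp add: mult.commute)
    have "real j / N - real j / real n = real j * (real n - N) / (N * real n)"
      using N0 f(3) by (simp add: field_simps)
    hence "\<bar>qq n s j - real j / real n\<bar> = real j * (real n - N) / (N * real n)"
    proof -
      have nN0: "0 \<le> real n - N" unfolding N_def Nt_def by simp
      show ?thesis unfolding q using \<open>real j / N - real j / real n = _\<close> nN0 N0 f(3) by (simp add: abs_of_nonneg)
    qed
    also have "\<dots> \<le> real j * (U n + real (Tn n)) / (real n / 2 * real n)"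
    proof (rule frac_le)
      show "0 \<le> real j * (U n + real (Tn n))" using f(9) by simp
      show "real j * (real n - N) \<le> real j * (U n + real (Tn n))" using nN by (intro mult_left_mono) auto
      show "0 < real n / 2 * real n" using f(3) by simp
      show "real n / 2 * real n \<le> N * real n" using N2 f(3) by (intro mult_right_mono) auto
    qed
    also have "\<dots> = real j * eta n / real n" unfolding eta_def using f(3) by (simp add: field_simps)
    finally show ?thesis using a by simp
  qed
  show ?thesis unfolding hyp_def
    using f(3,6) Tn_le qb f(9) by (auto simp: x0_def eta_def)
qed

definition "zz n j = (if j \<le> A then exp (lam * real j) else Yit A k (qq n) x0 (Tn n) j)"
definition "S n = (\<Sum>j\<le>k. pj k n (u n) j * zz n j)"

lemma good_exact:
  assumes g: "good n"
  shows "measure_pmf.expectation (chain_pmf k r n (u n) (m n) (Tn n)) (\<lambda>(E, C). exp (lam * real_of_int E))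
       = exp (-lam * real (Tn n)) * S n ^ m n"
proof -
  note f = good_facts[OF g]
  have q: "0 \<le> real j / Nt n (u n) t \<and> real j / Nt n (u n) t \<le> 1" if "t < Tn n" "j \<in> {k-r+2..k}" for t j
  proof -
    have N2: "real n / 2 \<le> Nt n (u n) t" using f(10)[OF that(1)] .
    have "real j \<le> real k" using that(2) by simp
    also have "real k \<le> real n / 2" using g unfolding good_def by simp
    finally have "real j \<le> Nt n (u n) t" using N2 by linarith
    moreover have "0 < Nt n (u n) t" using N2 f(3) by linarith
    ultimately show ?thesis by simp
  qed
  have e: "measure_pmf.expectation (chain_pmf k r n (u n) (m n) (Tn n)) (\<lambda>(E, C). exp (lam * real_of_int E))
     = exp (-lam * real (Tn n)) * (\<Sum>j\<le>k. pj k n (u n) j * (if j \<le> k-r+1 then exp (lam * real j)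
        else Hh (k-r+1) k (\<lambda>t j. real j / Nt n (u n) t) 0 (Tn n)
           (\<lambda>j. if j = k-r+1 then exp (lam * real (k-r+1)) else 1) j)) ^ m n"
    by (rule exact) (use f(1,2) r2 rk q in auto)
  have x: "(\<lambda>j. if j = A then exp (lam * real A) else 1) = x0"
    unfolding x0_def ya_def by simp
  have h: "Hh A k (\<lambda>t j. real j / Nt n (u n) t) 0 (Tn n) x0 = Yit A k (qq n) x0 (Tn n)"
    using Hh_Yit[of "Tn n" "Tn n" A k "\<lambda>t j. real j / Nt n (u n) t" x0]
    unfolding qq_def by simp
  show ?thesis using e unfolding A_def[symmetric] unfolding x h S_def zz_def by simp
qed

end

context setting begin

lemma U_top: "filterlim U at_top sequentially"
  unfolding U_def by (rule filterlim_compose[OF filterlim_real_sequentially ut])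

lemma ep_lim: "ep \<longlonglongrightarrow> 0"
proof -
  have "(\<lambda>n. inverse (U n)) \<longlonglongrightarrow> 0" by (rule tendsto_inverse_0_at_top[OF U_top])
  hence "(\<lambda>n. 1 / U n + U n / real n) \<longlonglongrightarrow> 0 + 0"
    using un unfolding U_def by (intro tendsto_add) (auto simp: divide_inverse)
  thus ?thesis unfolding ep_def by simp
qed

lemma good_ep: assumes g: "good n"
  shows "0 < ep n" "1 \<le> U n * ep n" "U n \<le> real n * ep n" "1 \<le> real n * ep n"
    "U n * ep n = 1 + U n ^ 2 / real n"
proof -
  note f = good_facts[OF g]
  show e: "U n * ep n = 1 + U n ^ 2 / real n" unfolding ep_def using f(9) by (simp add: field_simps power2_eq_square)
  show "0 < ep n" unfolding ep_def using f(3,9) by (intro add_pos_pos) auto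
  show "1 \<le> U n * ep n" unfolding e using f(3) by simp
  have ne: "real n * ep n = real n / U n + U n" unfolding ep_def using f(3) by (simp add: field_simps)
  have a: "1 \<le> real n / U n" using f(8,9) by simp
  show "U n \<le> real n * ep n" unfolding ne using a by linarith
  show "1 \<le> real n * ep n" unfolding ne using a f(9) by linarith
qed

lemma rel_lin:
  shows "rel ep (\<lambda>n. real n - U n - real i) (\<lambda>n. real n)"
    and "rel ep (\<lambda>n. real n - real i) (\<lambda>n. real n)"
    and "rel ep (\<lambda>n. U n - real i) (\<lambda>n. U n)"
    and "rel ep (\<lambda>n. real (Tn n) - real i) (\<lambda>n. \<tau> * U n)"
proof -
  show "rel ep (\<lambda>n. real n - U n - real i) (\<lambda>n. real n)"
  proof (rule relI_bound[of _ _ "1 + real i"])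
    show "eventually (\<lambda>n. \<bar>real n - U n - real i - real n\<bar> \<le> (1 + real i) * \<bar>real n * ep n\<bar>) sequentially"
      using ev_good
    proof eventually_elim
      case (elim n)
      note e = good_ep[OF elim] and f = good_facts[OF elim]
      have "\<bar>real n - U n - real i - real n\<bar> = U n + real i" using f(9) by simp
      also have "\<dots> \<le> real n * ep n + real i * (real n * ep n)"
      proof -
        have "real i * 1 \<le> real i * (real n * ep n)" using e(4) by (intro mult_left_mono) auto
        thus ?thesis using e(3) by linarith
      qed
      finally show ?case using e(1) f(3) by (simp add: algebra_simps)
    qed
  qed
  show "rel ep (\<lambda>n. real n - real i) (\<lambda>n. real n)"
  proof (rule relI_bound[of _ _ "real i"])
    show "eventually (\<lambda>n. \<bar>real n - real i - real n\<bar> \<le> real i * \<bar>real n * ep n\<bar>) sequentially"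
      using ev_good
    proof eventually_elim
      case (elim n)
      note e = good_ep[OF elim] and f = good_facts[OF elim]
      have "real i * 1 \<le> real i * (real n * ep n)" using e(4) by (intro mult_left_mono) auto
      thus ?case using e(1) f(3) by simp
    qed
  qed
  show "rel ep (\<lambda>n. U n - real i) (\<lambda>n. U n)"
  proof (rule relI_bound[of _ _ "real i"])
    show "eventually (\<lambda>n. \<bar>U n - real i - U n\<bar> \<le> real i * \<bar>U n * ep n\<bar>) sequentially"
      using ev_good
    proof eventually_elim
      case (elim n)
      note e = good_ep[OF elim] and f = good_facts[OF elim]
      have "real i * 1 \<le> real i * (U n * ep n)" using e(2) by (intro mult_left_mono) auto
      thus ?case using e(1) f(9) by simp
    qed
  qed
  show "rel ep (\<lambda>n. real (Tn n) - real i) (\<lambda>n. \<tau> * U n)"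
  proof (rule relI_bound[of _ _ "(1 + real i) / \<tau>"])
    show "eventually (\<lambda>n. \<bar>real (Tn n) - real i - \<tau> * U n\<bar> \<le> (1 + real i) / \<tau> * \<bar>\<tau> * U n * ep n\<bar>) sequentially"
      using ev_good
    proof eventually_elim
      case (elim n)
      note e = good_ep[OF elim] and f = good_facts[OF elim]
      have "\<bar>real (Tn n) - real i - \<tau> * U n\<bar> \<le> 1 + real i" using f(4,5) by linarith
      also have "\<dots> = (1 + real i) / \<tau> * \<tau> * 1" using \<tau>0 by simp
      also have "\<dots> \<le> (1 + real i) / \<tau> * \<tau> * (U n * ep n)" using e(2) \<tau>0 by (intro mult_left_mono) auto
      also have "\<dots> = (1 + real i) / \<tau> * \<bar>\<tau> * U n * ep n\<bar>" using e(1) f(9) \<tau>0 by (simp add: abs_mult)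
      finally show ?case .
    qed
  qed
qed

end

context setting begin

definition "gm n = \<mu> * real n ^ (r-1) / U n ^ (r-2)"

lemma rel_m: "rel ep (\<lambda>n. real (m n)) gm"
proof (rule relI_bound[of _ _ "1 / \<mu>"])
  show "eventually (\<lambda>n. \<bar>real (m n) - gm n\<bar> \<le> 1 / \<mu> * \<bar>gm n * ep n\<bar>) sequentially"
    using ev_good
  proof eventually_elim
    case (elim n)
    note e = good_ep[OF elim] and f = good_facts[OF elim]
    have g0: "0 \<le> gm n" unfolding gm_def using \<mu>0 f(3,9) by simp
    have "m n = nat \<lfloor>gm n\<rfloor>" unfolding mdef gm_def U_def by simp
    hence mm: "real (m n) = of_int \<lfloor>gm n\<rfloor>" using g0 by simp
    have d1: "\<bar>real (m n) - gm n\<bar> \<le> 1" unfolding mm by linarith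
    have "\<mu> \<le> gm n / U n"
    proof -
      have r1: "r - 1 = Suc (r - 2)" using r2 by simp
      have pw: "U n ^ (r-2) * U n = U n ^ (r-1)" unfolding r1 by (simp add: power_Suc2)
      have "gm n / U n = \<mu> * real n ^ (r-1) / (U n ^ (r-2) * U n)" unfolding gm_def by simp
      also have "\<dots> = \<mu> * (real n ^ (r-1) / U n ^ (r-1))" unfolding pw by simp
      also have "\<dots> = \<mu> * (real n / U n) ^ (r-1)" by (simp add: power_divide)
      finally have "gm n / U n = \<mu> * (real n / U n) ^ (r-1)" .
      moreover have "1 \<le> (real n / U n) ^ (r-1)" using f(8,9) by (intro one_le_power) simp
      ultimately show ?thesis using \<mu>0 by (simp add: mult_le_cancel_left1)
    qed
    also have "gm n / U n \<le> gm n * ep n"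
    proof -
      have "1 / U n \<le> ep n" unfolding ep_def using f(3,9) by simp
      hence "gm n * (1 / U n) \<le> gm n * ep n" using g0 by (intro mult_left_mono)
      thus ?thesis by simp
    qed
    finally have "1 \<le> 1 / \<mu> * (gm n * ep n)" using \<mu>0 by (simp add: field_simps)
    thus ?case using d1 g0 e(1) by (simp add: abs_mult)
  qed
qed

lemma rel_chooseN: "rel ep (\<lambda>n. real ((n - u n) choose j)) (\<lambda>n. real n ^ j / fact j)"
proof -
  have "rel ep (\<lambda>n. \<Prod>i<j. real n - U n - real i) (\<lambda>n. \<Prod>i<j. real n)"
    by (rule rel_prod[OF ep_lim]) (auto intro: rel_lin)
  hence "rel ep (\<lambda>n. 1 / fact j * (\<Prod>i<j. real n - U n - real i)) (\<lambda>n. 1 / fact j * (\<Prod>i<j. real n))"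
    by (rule rel_cmult)
  moreover have "eventually (\<lambda>n. 1 / fact j * (\<Prod>i<j. real n - U n - real i) = real ((n - u n) choose j)) sequentially"
    using ev_good
  proof eventually_elim
    case (elim n)
    have "real (n - u n) = real n - U n" using good_facts(1)[OF elim] unfolding U_def by simp
    thus ?case by (simp add: choose_prod)
  qed
  ultimately show ?thesis by (rule rel_cong[rotated 2]) auto
qed

lemma rel_chooseU: "rel ep (\<lambda>n. real (u n choose j)) (\<lambda>n. U n ^ j / fact j)"
proof -
  have "rel ep (\<lambda>n. \<Prod>i<j. U n - real i) (\<lambda>n. \<Prod>i<j. U n)"
    by (rule rel_prod[OF ep_lim]) (auto intro: rel_lin)
  hence "rel ep (\<lambda>n. 1 / fact j * (\<Prod>i<j. U n - real i)) (\<lambda>n. 1 / fact j * (\<Prod>i<j. U n))"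
    by (rule rel_cmult)
  thus ?thesis by (rule rel_cong[rotated 2]) (auto simp: choose_prod U_def)
qed

lemma rel_choosen: "rel ep (\<lambda>n. real (n choose j)) (\<lambda>n. real n ^ j / fact j)"
proof -
  have "rel ep (\<lambda>n. \<Prod>i<j. real n - real i) (\<lambda>n. \<Prod>i<j. real n)"
    by (rule rel_prod[OF ep_lim]) (auto intro: rel_lin)
  hence "rel ep (\<lambda>n. 1 / fact j * (\<Prod>i<j. real n - real i)) (\<lambda>n. 1 / fact j * (\<Prod>i<j. real n))"
    by (rule rel_cmult)
  thus ?thesis by (rule rel_cong[rotated 2]) (auto simp: choose_prod)
qed

lemma rel_chooseT: "rel ep (\<lambda>n. real (Tn n choose j)) (\<lambda>n. (\<tau> * U n) ^ j / fact j)"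
proof -
  have "rel ep (\<lambda>n. \<Prod>i<j. real (Tn n) - real i) (\<lambda>n. \<Prod>i<j. \<tau> * U n)"
    by (rule rel_prod[OF ep_lim]) (auto intro: rel_lin)
  hence "rel ep (\<lambda>n. 1 / fact j * (\<Prod>i<j. real (Tn n) - real i)) (\<lambda>n. 1 / fact j * (\<Prod>i<j. \<tau> * U n))"
    by (rule rel_cmult)
  thus ?thesis by (rule rel_cong[rotated 2]) (auto simp: choose_prod)
qed

definition "gp j n = (real n ^ j / fact j) * (U n ^ (k - j) / fact (k - j)) * (1 / (real n ^ k / fact k))"

lemma rel_p: "rel ep (\<lambda>n. pj k n (u n) j) (gp j)"
proof -
  have i: "rel ep (\<lambda>n. 1 / real (n choose k)) (\<lambda>n. 1 / (real n ^ k / fact k))"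
  proof (rule rel_inv[OF ep_lim _ rel_choosen])
    show "eventually (\<lambda>n. real n ^ k / fact k \<noteq> 0) sequentially"
      using ev_good by eventually_elim (use good_facts(3) in auto)
  qed
  have "rel ep (\<lambda>n. real ((n - u n) choose j) * real (u n choose (k - j)) * (1 / real (n choose k))) (gp j)"
    unfolding gp_def by (intro rel_mult[OF ep_lim] rel_chooseN rel_chooseU i)
  thus ?thesis by (rule rel_cong[rotated 2]) (simp_all add: pj_def)
qed

end


lemma alg_main:
  fixes x y \<mu> \<tau> :: real
  assumes x: "x > 0" and y: "y > 0" and K: "K = Aa + e + a" and R: "e + a = Suc R2"
  shows "\<mu> * x ^ (e + a) / y ^ R2 * ((x ^ (Aa + e) / fact (Aa + e)) * (y ^ (K - (Aa + e)) / fact (K - (Aa + e)))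
           * (1 / (x ^ K / fact K))) * (Z / fact e) * (1 / x ^ e)
       = \<mu> * (Z / y ^ e) * y * fact K / (fact (Aa + e) * fact a * fact e)"
proof -
  have Ka: "K - (Aa + e) = a" using K by simp
  have xx: "x ^ (e + a) * x ^ (Aa + e) = x ^ K * x ^ e" unfolding K by (simp add: power_add[symmetric] algebra_simps)
  have yy: "y ^ a * y ^ e = y ^ R2 * y" using R by (simp add: power_add[symmetric] add.commute)
  have "\<mu> * x ^ (e + a) / y ^ R2 * ((x ^ (Aa + e) / fact (Aa + e)) * (y ^ a / fact a)
           * (1 / (x ^ K / fact K))) * (Z / fact e) * (1 / x ^ e)
       = \<mu> * (x ^ (e + a) * x ^ (Aa + e)) / (x ^ K * x ^ e) * (y ^ a * y ^ e) / (y ^ R2 * y ^ e) * Z * fact K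
          / (fact (Aa + e) * fact a * fact e)"
    using x y by (simp add: field_simps)
  also have "\<dots> = \<mu> * (y ^ R2 * y) / (y ^ R2 * y ^ e) * Z * fact K / (fact (Aa + e) * fact a * fact e)"
    unfolding xx yy using x by simp
  also have "\<dots> = \<mu> * (Z / y ^ e) * y * fact K / (fact (Aa + e) * fact a * fact e)"
    using y by (simp add: field_simps)
  finally show ?thesis unfolding Ka .
qed

lemma alg_small:
  fixes x y :: real
  assumes x: "x > 0" and y: "y > 0" and K: "K = j + b + R1" and R: "R1 = Suc R2"
  shows "x ^ R1 / y ^ R2 * (x ^ j * y ^ (K - j) / x ^ K) = y * (y / x) ^ b"
proof -
  have Kj: "K - j = R1 + b" using K by simp
  have "x ^ R1 / y ^ R2 * (x ^ j * y ^ (R1 + b) / x ^ K) = (x ^ R1 * x ^ j / x ^ K) * (y ^ (Suc R2 + b) / y ^ R2)"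
    using R by (simp add: field_simps)
  also have "x ^ R1 * x ^ j / x ^ K = 1 / x ^ b" unfolding K using x by (simp add: power_add field_simps)
  also have "y ^ (Suc R2 + b) / y ^ R2 = y * y ^ b" using y by (simp add: power_add field_simps)
  finally show ?thesis unfolding Kj by (simp add: power_divide field_simps)
qed


context setting begin

lemma gmgp_eq:
  assumes g: "good n" and e: "e \<le> r - 1"
  shows "gm n * gp (A + e) n * (Z / fact e) * (1 / real n ^ e)
       = \<mu> * (Z / U n ^ e) * U n * fact k / (fact (A + e) * fact (r - 1 - e) * fact e)"
proof -
  note f = good_facts[OF g]
  have K: "k = A + e + (r - 1 - e)" using e Ar by simp
  have R: "e + (r - 1 - e) = Suc (r - 2)" using e r2 by simp
  have R1: "e + (r - 1 - e) = r - 1" using e by simp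
  have "\<mu> * real n ^ (e + (r - 1 - e)) / U n ^ (r - 2) * ((real n ^ (A + e) / fact (A + e)) *
        (U n ^ (k - (A + e)) / fact (k - (A + e))) * (1 / (real n ^ k / fact k))) * (Z / fact e) * (1 / real n ^ e)
       = \<mu> * (Z / U n ^ e) * U n * fact k / (fact (A + e) * fact (r - 1 - e) * fact e)"
    by (rule alg_main[OF f(3) _ K R]) (use f(9) in simp)
  thus ?thesis unfolding gm_def gp_def R1 .
qed

lemma rel_main:
  assumes e: "e \<le> r - 1"
  shows "rel ep (\<lambda>n. real (m n) * pj k n (u n) (A + e) * real (Tn n choose e) * (1 / real n ^ e))
           (\<lambda>n. \<mu> * \<tau> ^ e * U n * fact k / (fact (A + e) * fact (r - 1 - e) * fact e))"
proof -
  have R: "rel ep (\<lambda>n. real (m n) * pj k n (u n) (A + e) * real (Tn n choose e) * (1 / real n ^ e))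
           (\<lambda>n. gm n * gp (A + e) n * ((\<tau> * U n) ^ e / fact e) * (1 / real n ^ e))"
    by (intro rel_mult[OF ep_lim] rel_m rel_p rel_chooseT rel_refl)
  have E: "eventually (\<lambda>n. gm n * gp (A + e) n * ((\<tau> * U n) ^ e / fact e) * (1 / real n ^ e)
      = \<mu> * \<tau> ^ e * U n * fact k / (fact (A + e) * fact (r - 1 - e) * fact e)) sequentially"
    using ev_good
  proof eventually_elim
    case (elim n)
    have "(\<tau> * U n) ^ e / U n ^ e = \<tau> ^ e" using good_facts(9)[OF elim] by (simp add: power_mult_distrib)
    thus ?case unfolding gmgp_eq[OF elim e] by simp
  qed
  show ?thesis by (rule rel_cong[OF _ E R]) simp
qed

lemma rel_Q:
  assumes e: "e \<le> r - 1"
  shows "rel ep (\<lambda>n. real (m n) * pj k n (u n) (A + e) * real (Tn n) ^ e * (1 / real n ^ e))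
           (\<lambda>n. \<mu> * \<tau> ^ e * U n * fact k / (fact (A + e) * fact (r - 1 - e) * fact e) * fact e)"
proof -
  have T: "rel ep (\<lambda>n. real (Tn n) ^ e) (\<lambda>n. (\<tau> * U n) ^ e)"
    using rel_pow[OF ep_lim rel_lin(4)[of 0]] by simp
  have R: "rel ep (\<lambda>n. real (m n) * pj k n (u n) (A + e) * real (Tn n) ^ e * (1 / real n ^ e))
           (\<lambda>n. gm n * gp (A + e) n * (\<tau> * U n) ^ e * (1 / real n ^ e))"
    by (intro rel_mult[OF ep_lim] rel_m rel_p T rel_refl)
  have E: "eventually (\<lambda>n. gm n * gp (A + e) n * (\<tau> * U n) ^ e * (1 / real n ^ e)
      = \<mu> * \<tau> ^ e * U n * fact k / (fact (A + e) * fact (r - 1 - e) * fact e) * fact e) sequentially"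
    using ev_good
  proof eventually_elim
    case (elim n)
    have "(fact e * (\<tau> * U n) ^ e) / U n ^ e = fact e * \<tau> ^ e" using good_facts(9)[OF elim] by (simp add: power_mult_distrib)
    moreover have "gm n * gp (A + e) n * (\<tau> * U n) ^ e * (1 / real n ^ e)
        = gm n * gp (A + e) n * ((fact e * (\<tau> * U n) ^ e) / fact e) * (1 / real n ^ e)" by simp
    ultimately show ?case unfolding gmgp_eq[OF elim e] by simp
  qed
  show ?thesis by (rule rel_cong[OF _ E R]) simp
qed

end


lemma cmult_bigo: "f \<in> O[F](g) \<Longrightarrow> (\<lambda>n. c * f n) \<in> O[F](g)" for f g :: "_ \<Rightarrow> real"
proof -
  assume "f \<in> O[F](g)"
  hence "(\<lambda>n. c * f n) \<in> O[F](\<lambda>n. c * g n)" by (rule landau_o.big.mult_left)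
  also have "(\<lambda>n. c * g n) \<in> O[F](g)" by (rule bigoI[of _ "\<bar>c\<bar>"]) (simp add: abs_mult)
  finally show ?thesis .
qed

lemma dominated_bigo:
  fixes f g h :: "_ \<Rightarrow> real"
  assumes "eventually (\<lambda>n. \<bar>f n\<bar> \<le> h n) F" "h \<in> O[F](g)"
  shows "f \<in> O[F](g)"
proof -
  have "f \<in> O[F](h)" by (rule bigoI[of _ 1]) (use assms(1) in \<open>auto elim: eventually_mono\<close>)
  thus ?thesis using assms(2) by (rule landau_o.big_trans)
qed

context setting begin

definition "X n = eta n + real (Tn n) / real n + 1 / real (Tn n)"

lemma W_final:
  assumes e: "e \<le> r - 1"
  shows "\<exists>K\<ge>0. eventually (\<lambda>n. \<bar>Yit A k (qq n) x0 (Tn n) (A + e) - 1 - Lf A ya (real n) e (Tn n)\<bar>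
            \<le> K * (real (Tn n) / real n) ^ e * X n) sequentially"
proof -
  have "A + e \<le> k" using e Ar by simp
  from W_bounds[OF this, of ya] obtain B K where K: "0 \<le> K" and H: "\<forall>nn T eta q x0 s. hyp A k nn T eta q x0 ya \<longrightarrow> s \<le> T \<longrightarrow>
     \<bar>Yit A k q x0 s (A+e) - 1\<bar> \<le> B * (T/nn)^e \<and>
     \<bar>Yit A k q x0 s (A+e) - 1 - Lf A ya nn e s\<bar> \<le> real s * K * (T/nn)^e * (eta + T/nn + 1/T) / T"
    by blast
  show ?thesis
  proof (intro exI[of _ K] conjI K)
    show "eventually (\<lambda>n. \<bar>Yit A k (qq n) x0 (Tn n) (A + e) - 1 - Lf A ya (real n) e (Tn n)\<bar>
            \<le> K * (real (Tn n) / real n) ^ e * X n) sequentially"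
      using ev_good
    proof eventually_elim
      case (elim n)
      have T0: "real (Tn n) > 0" using good_facts(6)[OF elim] by simp
      have "\<bar>Yit A k (qq n) x0 (Tn n) (A + e) - 1 - Lf A ya (real n) e (Tn n)\<bar>
          \<le> real (Tn n) * K * (real (Tn n) / real n) ^ e * X n / real (Tn n)"
        using H good_hyp[OF elim] unfolding X_def by blast
      also have "\<dots> = K * (real (Tn n) / real n) ^ e * X n" using T0 by simp
      finally show ?case .
    qed
  qed
qed

lemma X_bigo: "X \<in> O(ep)"
proof (rule bigoI[of _ "2 * (1 + \<tau>) + \<tau> + 2 / \<tau>"])
  show "eventually (\<lambda>n. norm (X n) \<le> (2 * (1 + \<tau>) + \<tau> + 2 / \<tau>) * norm (ep n)) sequentially"
    using ev_good
  proof eventually_elim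
    case (elim n)
    note f = good_facts[OF elim] and g = good_ep[OF elim]
    have n0: "real n > 0" using f(3) .
    have e1: "eta n \<le> 2 * (1 + \<tau>) * (U n / real n)"
      unfolding eta_def using f(4) n0 by (simp add: field_simps)
    have e2: "real (Tn n) / real n \<le> \<tau> * (U n / real n)"
      using f(4) n0 by (simp add: field_simps)
    have e3: "1 / real (Tn n) \<le> 2 / \<tau> * (1 / U n)"
    proof -
      have "\<tau> * U n / 2 > 0" using \<tau>0 f(9) by simp
      hence "1 / real (Tn n) \<le> 1 / (\<tau> * U n / 2)" using f(7) by (intro divide_left_mono) auto
      thus ?thesis using \<tau>0 f(9) by (simp add: field_simps)
    qed
    have a: "U n / real n \<le> ep n" "1 / U n \<le> ep n" unfolding ep_def using f(9) n0 by auto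
    have X0: "0 \<le> X n" unfolding X_def eta_def using f(9) n0 by simp
    have "X n \<le> 2 * (1 + \<tau>) * ep n + \<tau> * ep n + 2 / \<tau> * ep n"
      unfolding X_def using e1 e2 e3 a \<tau>0
      by (smt (verit, best) divide_pos_pos mult_left_mono)
    thus ?case using X0 g(1) by (simp add: algebra_simps)
  qed
qed

lemma zz_Yit: "e \<le> r - 1 \<Longrightarrow> zz n (A + e) = Yit A k (qq n) x0 (Tn n) (A + e)"
  by (cases e) (auto simp: zz_def Yit_A x0_def ya_def)

end

context setting begin

definition "te e n = \<mu> * (ya - 1) * real (k choose A) * real ((r - 1) choose e) * \<tau> ^ e * U n"

lemma constU_bigo: "(\<lambda>n. c * U n) \<in> O(U)"
  by (rule cmult_bigo[OF landau_o.big_refl])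

lemma term_e:
  assumes e: "e \<le> r - 1"
  shows "(\<lambda>n. real (m n) * pj k n (u n) (A + e) * (zz n (A + e) - 1) - te e n) \<in> O(\<lambda>n. U n * ep n)"
proof -
  obtain K where K0: "K \<ge> 0" and K: "eventually (\<lambda>n. \<bar>Yit A k (qq n) x0 (Tn n) (A + e) - 1 - Lf A ya (real n) e (Tn n)\<bar>
            \<le> K * (real (Tn n) / real n) ^ e * X n) sequentially"
    using W_final[OF e] by blast
  define c where "c = \<mu> * \<tau> ^ e * fact k / (fact (A + e) * fact (r - 1 - e) * fact e)"
  define ce where "ce = (ya - 1) * (fact (A + e) / fact A)"
  define mpC where "mpC n = real (m n) * pj k n (u n) (A + e) * real (Tn n choose e) * (1 / real n ^ e)" for n
  define Q where "Q n = real (m n) * pj k n (u n) (A + e) * real (Tn n) ^ e * (1 / real n ^ e)" for n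
  define err where "err n = real (m n) * pj k n (u n) (A + e) * (Yit A k (qq n) x0 (Tn n) (A + e) - 1 - Lf A ya (real n) e (Tn n))" for n
  have ge: "(\<lambda>n. \<mu> * \<tau> ^ e * U n * fact k / (fact (A + e) * fact (r - 1 - e) * fact e)) = (\<lambda>n. c * U n)"
    unfolding c_def by (rule ext) (simp add: field_simps)
  have a: "(\<lambda>n. mpC n - c * U n) \<in> O(\<lambda>n. U n * ep n)"
    using rel_diff_bigo[OF rel_main[OF e, unfolded ge] constU_bigo[of c]] unfolding mpC_def .
  have b: "(\<lambda>n. ce * (mpC n - c * U n)) \<in> O(\<lambda>n. U n * ep n)" by (rule cmult_bigo[OF a])
  have gq: "(\<lambda>n. \<mu> * \<tau> ^ e * U n * fact k / (fact (A + e) * fact (r - 1 - e) * fact e) * fact e) = (\<lambda>n. (c * fact e) * U n)"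
    unfolding c_def by (rule ext) (simp add: field_simps)
  have Qb: "Q \<in> O(U)"
    using landau_o.big_trans[OF rel_bigo[OF ep_lim rel_Q[OF e, unfolded gq]] constU_bigo[of "c * fact e"]]
    unfolding Q_def .
  have QX: "(\<lambda>n. K * (Q n * X n)) \<in> O(\<lambda>n. U n * ep n)"
    by (intro cmult_bigo landau_o.big.mult Qb X_bigo)
  have errb: "err \<in> O(\<lambda>n. U n * ep n)"
  proof (rule dominated_bigo[OF _ QX])
    show "eventually (\<lambda>n. \<bar>err n\<bar> \<le> K * (Q n * X n)) sequentially"
      using K
    proof eventually_elim
      case (elim n)
      have mp0: "0 \<le> real (m n) * pj k n (u n) (A + e)" by (simp add: pj_nonneg)
      have "\<bar>err n\<bar> = real (m n) * pj k n (u n) (A + e) * \<bar>Yit A k (qq n) x0 (Tn n) (A + e) - 1 - Lf A ya (real n) e (Tn n)\<bar>"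
        unfolding err_def using mp0 pj_nonneg[of k n "u n" "A + e"] by (simp add: abs_mult)
      also have "\<dots> \<le> real (m n) * pj k n (u n) (A + e) * (K * (real (Tn n) / real n) ^ e * X n)"
        by (rule mult_left_mono[OF elim mp0])
      also have "\<dots> = K * (Q n * X n)" unfolding Q_def by (simp add: power_divide)
      finally show ?case .
    qed
  qed
  have sum: "(\<lambda>n. ce * (mpC n - c * U n) + err n) \<in> O(\<lambda>n. U n * ep n)"
    by (rule sum_in_bigo(1)[OF b errb])
  have ident: "ce * c = \<mu> * (ya - 1) * real (k choose A) * real ((r - 1) choose e) * \<tau> ^ e"
  proof -
    have "real (k choose A) = fact k / (fact A * fact (r - 1))" using binomial_fact[OF Ak] kA by simp
    moreover have "real ((r - 1) choose e) = fact (r - 1) / (fact e * fact (r - 1 - e))" using binomial_fact[OF e] by simp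
    moreover have "ce * c = \<mu> * (ya - 1) * (fact k / (fact A * fact (r - 1))) * (fact (r - 1) / (fact e * fact (r - 1 - e))) * \<tau> ^ e"
      unfolding ce_def c_def by (simp add: field_simps)
    ultimately show ?thesis by simp
  qed
  have Ev: "eventually (\<lambda>n. ce * (mpC n - c * U n) + err n
       = real (m n) * pj k n (u n) (A + e) * (zz n (A + e) - 1) - te e n) sequentially"
  proof (rule always_eventually, intro allI)
    fix n
    have "real (m n) * pj k n (u n) (A + e) * Lf A ya (real n) e (Tn n) = ce * mpC n"
      unfolding Lf_def ce_def mpC_def by (simp add: field_simps)
    moreover have "te e n = ce * c * U n" unfolding te_def ident by simp
    ultimately show "ce * (mpC n - c * U n) + err n = real (m n) * pj k n (u n) (A + e) * (zz n (A + e) - 1) - te e n"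
      unfolding err_def zz_Yit[OF e] by (simp add: algebra_simps)
  qed
  show ?thesis using landau_o.big.in_cong[OF Ev] sum by blast
qed

end

context setting begin

lemma small_j:
  assumes j: "j < A"
  shows "(\<lambda>n. real (m n) * pj k n (u n) j * (exp (lam * real j) - 1)) \<in> O(\<lambda>n. U n * ep n)"
proof -
  define C where "C = \<mu> * fact k / (fact j * fact (k - j))"
  have C0: "0 \<le> C" unfolding C_def using \<mu>0 by simp
  have mp: "(\<lambda>n. real (m n) * pj k n (u n) j) \<in> O(\<lambda>n. gm n * gp j n)"
    by (rule rel_bigo[OF ep_lim rel_mult[OF ep_lim rel_m rel_p]])
  have g: "(\<lambda>n. gm n * gp j n) \<in> O(\<lambda>n. U n * ep n)"
  proof (rule bigoI[of _ C])
    show "eventually (\<lambda>n. norm (gm n * gp j n) \<le> C * norm (U n * ep n)) sequentially"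
      using ev_good
    proof eventually_elim
      case (elim n)
      note f = good_facts[OF elim] and g = good_ep[OF elim]
      have K: "k = j + (A - j) + (r - 1)" using j Ar by simp
      have R: "r - 1 = Suc (r - 2)" using r2 by simp
      have eq: "gm n * gp j n = C * (real n ^ (r - 1) / U n ^ (r - 2) * (real n ^ j * U n ^ (k - j) / real n ^ k))"
        unfolding gm_def gp_def C_def by (simp add: field_simps)
      also have "\<dots> = C * (U n * (U n / real n) ^ (A - j))"
        by (subst alg_small[OF f(3) _ K R]) (use f(9) in auto)
      finally have eq: "gm n * gp j n = C * (U n * (U n / real n) ^ (A - j))" .
      have q0: "0 \<le> U n / real n" "U n / real n \<le> 1" using f(3,8,9) by auto
      have "(U n / real n) ^ (A - j) \<le> (U n / real n) ^ 1"
        by (rule power_decreasing) (use j q0 in auto)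
      hence "U n * (U n / real n) ^ (A - j) \<le> U n * (U n / real n)"
        using f(9) by (intro mult_left_mono) auto
      also have "\<dots> = U n ^ 2 / real n" by (simp add: power2_eq_square)
      also have "\<dots> \<le> U n * ep n" unfolding g(5) by simp
      finally have "U n * (U n / real n) ^ (A - j) \<le> U n * ep n" .
      hence "C * (U n * (U n / real n) ^ (A - j)) \<le> C * (U n * ep n)" using mult_left_mono[OF _ C0] by blast
      moreover have "0 \<le> C * (U n * (U n / real n) ^ (A - j))" using C0 q0 f(9) by simp
      ultimately have "\<bar>gm n * gp j n\<bar> \<le> C * (U n * ep n)" unfolding eq by simp
      thus ?case using g(1) f(9) by simp
    qed
  qed
  have "(\<lambda>n. (exp (lam * real j) - 1) * (real (m n) * pj k n (u n) j)) \<in> O(\<lambda>n. U n * ep n)"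
    by (rule cmult_bigo[OF landau_o.big_trans[OF mp g]])
  thus ?thesis by (simp add: mult.commute)
qed

lemma sum_te: "(\<Sum>e\<le>r-1. te e n) = (phi k r \<mu> lam \<tau> + lam * \<tau>) * U n"
proof -
  have h1: "(\<Sum>e\<le>r-1. te e n) = \<mu> * (ya - 1) * real (k choose A) * U n * (\<Sum>e\<le>r-1. real ((r - 1) choose e) * \<tau> ^ e)"
  proof -
    have "(\<Sum>e\<le>r-1. te e n) = (\<Sum>e\<le>r-1. (\<mu> * (ya - 1) * real (k choose A) * U n) * (real ((r - 1) choose e) * \<tau> ^ e))"
      by (intro sum.cong refl) (simp add: te_def mult_ac)
    thus ?thesis by (simp only: sum_distrib_left)
  qed
  have h2: "(\<Sum>e\<le>r-1. real ((r - 1) choose e) * \<tau> ^ e) = (1 + \<tau>) ^ (r - 1)"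
    using binomial_ring[of \<tau> 1 "r - 1"] by (simp add: add.commute)
  have h3: "real (k choose A) = real (k choose (r - 1))"
  proof -
    have e: "k - (r - 1) = A" using Ar by simp
    show ?thesis using binomial_symmetric[of "r - 1" k] rk e by simp
  qed
  have h4: "exp (real (k - r + 1) * lam) = ya" unfolding ya_def A_def by (simp add: mult.commute)
  show ?thesis unfolding phi_def h1 h2 h3 h4 by (simp add: algebra_simps)
qed

definition "Dn n = real (m n) * (S n - 1) - (phi k r \<mu> lam \<tau> + lam * \<tau>) * U n"

lemma S_split:
  assumes g: "good n"
  shows "real (m n) * (S n - 1) = (\<Sum>j<A. real (m n) * pj k n (u n) j * (exp (lam * real j) - 1))
     + (\<Sum>e\<le>r-1. real (m n) * pj k n (u n) (A + e) * (zz n (A + e) - 1))"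
proof -
  note f = good_facts[OF g]
  have "S n - 1 = (\<Sum>j\<le>k. pj k n (u n) j * (zz n j - 1))"
    unfolding S_def using pj_sum[OF f(1,2)] by (simp add: algebra_simps sum_subtractf)
  also have "{..k} = {..<A} \<union> {A..k}" using Ak by auto
  also have "(\<Sum>j\<in>{..<A} \<union> {A..k}. pj k n (u n) j * (zz n j - 1))
      = (\<Sum>j<A. pj k n (u n) j * (zz n j - 1)) + (\<Sum>j\<in>{A..k}. pj k n (u n) j * (zz n j - 1))"
    by (rule sum.union_disjoint) auto
  also have "(\<Sum>j\<in>{A..k}. pj k n (u n) j * (zz n j - 1)) = (\<Sum>e\<le>r-1. pj k n (u n) (A + e) * (zz n (A + e) - 1))"
  proof -
    have "{A..k} = {0 + A..(r - 1) + A}" using Ar by simp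
    hence "(\<Sum>j\<in>{A..k}. pj k n (u n) j * (zz n j - 1)) = (\<Sum>e\<in>{0..r-1}. pj k n (u n) (e + A) * (zz n (e + A) - 1))"
      by (simp only: sum.shift_bounds_cl_nat_ivl)
    thus ?thesis by (simp add: atLeast0AtMost add.commute)
  qed
  also have "(\<Sum>j<A. pj k n (u n) j * (zz n j - 1)) = (\<Sum>j<A. pj k n (u n) j * (exp (lam * real j) - 1))"
    by (intro sum.cong) (auto simp: zz_def)
  finally show ?thesis by (simp add: sum_distrib_left algebra_simps)
qed

lemma Dn_bigo: "Dn \<in> O(\<lambda>n. U n * ep n)"
proof -
  have a: "(\<lambda>n. \<Sum>j<A. real (m n) * pj k n (u n) j * (exp (lam * real j) - 1)) \<in> O(\<lambda>n. U n * ep n)"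
    by (rule big_sum_in_bigo) (rule small_j, simp)
  have b: "(\<lambda>n. \<Sum>e\<le>r-1. real (m n) * pj k n (u n) (A + e) * (zz n (A + e) - 1) - te e n) \<in> O(\<lambda>n. U n * ep n)"
    by (rule big_sum_in_bigo) (rule term_e, simp)
  have c: "(\<lambda>n. (\<Sum>j<A. real (m n) * pj k n (u n) j * (exp (lam * real j) - 1))
      + (\<Sum>e\<le>r-1. real (m n) * pj k n (u n) (A + e) * (zz n (A + e) - 1) - te e n)) \<in> O(\<lambda>n. U n * ep n)"
    by (rule sum_in_bigo(1)[OF a b])
  have Ev: "eventually (\<lambda>n. (\<Sum>j<A. real (m n) * pj k n (u n) j * (exp (lam * real j) - 1))
      + (\<Sum>e\<le>r-1. real (m n) * pj k n (u n) (A + e) * (zz n (A + e) - 1) - te e n) = Dn n) sequentially"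
    using ev_good
  proof eventually_elim
    case (elim n)
    show ?case unfolding Dn_def S_split[OF elim] sum_te[symmetric] by (simp add: sum_subtractf)
  qed
  show ?thesis using landau_o.big.in_cong[OF Ev] c by blast
qed

end

context setting begin

lemma Uep_bigo_U: "(\<lambda>n. U n * ep n) \<in> O(U)"
proof (rule bigoI[of _ 2])
  show "eventually (\<lambda>n. norm (U n * ep n) \<le> 2 * norm (U n)) sequentially"
    using ev_good
  proof eventually_elim
    case (elim n)
    note f = good_facts[OF elim] and g = good_ep[OF elim]
    have "U n ^ 2 / real n \<le> U n" using f(3,8,9) by (simp add: power2_eq_square field_simps)
    hence "U n * ep n \<le> 2 * U n" unfolding g(5) using f(9) by linarith
    thus ?case using g(1) f(9) by simp
  qed
qed

lemma Uep_bigo_max: "(\<lambda>n. U n * ep n) \<in> O(\<lambda>n. max 1 (real (u n) ^ 2 / real n))"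
proof (rule bigoI[of _ 2])
  show "eventually (\<lambda>n. norm (U n * ep n) \<le> 2 * norm (max 1 (real (u n) ^ 2 / real n))) sequentially"
    using ev_good
  proof eventually_elim
    case (elim n)
    note f = good_facts[OF elim] and g = good_ep[OF elim]
    have "1 + U n ^ 2 / real n \<le> 2 * max 1 (U n ^ 2 / real n)" by simp
    hence "U n * ep n \<le> 2 * max 1 (real (u n) ^ 2 / real n)" using g(5) unfolding U_def by simp
    thus ?case using g(1) f(9) by simp
  qed
qed

lemma m_big: "eventually (\<lambda>n. \<mu> * real n / 2 \<le> real (m n)) sequentially"
  using ev_good
proof eventually_elim
  case (elim n)
  note f = good_facts[OF elim]
  have g0: "0 \<le> gm n" unfolding gm_def using \<mu>0 f(3,9) by simp
  have "m n = nat \<lfloor>gm n\<rfloor>" unfolding mdef gm_def U_def by simp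
  hence mm: "real (m n) = of_int \<lfloor>gm n\<rfloor>" using g0 by simp
  have r1: "r - 1 = Suc (r - 2)" using r2 by simp
  have "gm n = \<mu> * real n * (real n / U n) ^ (r - 2)"
    unfolding gm_def r1 using f(9) by (simp add: power_divide)
  moreover have "1 \<le> (real n / U n) ^ (r - 2)" using f(8,9) by (intro one_le_power) simp
  moreover have "\<mu> * real n * 1 \<le> \<mu> * real n * (real n / U n) ^ (r - 2)"
    using \<open>1 \<le> (real n / U n) ^ (r - 2)\<close> \<mu>0 f(3) by (intro mult_left_mono) auto
  ultimately have "\<mu> * real n \<le> gm n" by simp
  moreover have "2 \<le> \<mu> * real n" using elim unfolding good_def by simp
  ultimately show ?case unfolding mm by linarith
qed

end

context setting begin

lemma final:
  "(\<lambda>n. ln (measure_pmf.expectation (chain_pmf k r n (u n) (m n) (nat \<lfloor>\<tau> * real (u n)\<rfloor>))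
            (\<lambda>(E, C). exp (lam * real_of_int E))) - phi k r \<mu> lam \<tau> * real (u n))
   \<in> O(\<lambda>n. max 1 (real (u n) ^ 2 / real n))"
proof -
  define Ph where "Ph = phi k r \<mu> lam \<tau>"
  define MS where "MS n = real (m n) * (S n - 1)" for n
  define E where "E n = measure_pmf.expectation (chain_pmf k r n (u n) (m n) (Tn n)) (\<lambda>(E, C). exp (lam * real_of_int E))" for n
  have MSe: "MS n = Dn n + (Ph + lam * \<tau>) * U n" for n unfolding MS_def Dn_def Ph_def by simp
  have "(\<lambda>n. Dn n + (Ph + lam * \<tau>) * U n) \<in> O(U)"
    by (rule sum_in_bigo(1)[OF landau_o.big_trans[OF Dn_bigo Uep_bigo_U] constU_bigo])
  hence MSb: "MS \<in> O(U)" unfolding MSe[abs_def] .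
  then obtain c where c: "c > 0" and cb: "eventually (\<lambda>n. norm (MS n) \<le> c * norm (U n)) sequentially"
    by (elim landau_o.bigE) auto
  have sm: "eventually (\<lambda>n. U n / real n < \<mu> / (4 * c)) sequentially"
    by (rule Un_small) (use \<mu>0 c in simp)
  have key: "eventually (\<lambda>n. \<bar>S n - 1\<bar> \<le> 1/2 \<and>
      \<bar>real (m n) * (ln (S n) - (S n - 1))\<bar> \<le> (4 * c^2 / \<mu>) * (U n * ep n)) sequentially"
    using ev_good m_big cb sm
  proof eventually_elim
    case (elim n)
    note f = good_facts[OF elim(1)] and g = good_ep[OF elim(1)]
    have n0: "real n > 0" using f(3) .
    have mpos: "real (m n) > 0" using elim(2) \<mu>0 n0 by (smt (verit) divide_pos_pos mult_pos_pos)
    have MSc: "\<bar>MS n\<bar> \<le> c * U n" using elim(3) f(9) by simp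
    have S1: "\<bar>S n - 1\<bar> = \<bar>MS n\<bar> / real (m n)" unfolding MS_def using mpos by (simp add: abs_mult)
    also have "\<dots> \<le> c * U n / (\<mu> * real n / 2)"
      using MSc elim(2) mpos \<mu>0 n0 c f(9) by (intro frac_le) auto
    also have "\<dots> = (2 * c / \<mu>) * (U n / real n)" using \<mu>0 n0 by (simp add: field_simps)
    also have "\<dots> \<le> (2 * c / \<mu>) * (\<mu> / (4 * c))" using elim(4) c \<mu>0 by (intro mult_left_mono) auto
    also have "\<dots> = 1/2" using c \<mu>0 by (simp add: field_simps)
    finally have h: "\<bar>S n - 1\<bar> \<le> 1/2" .
    have "\<bar>ln (1 + (S n - 1)) - (S n - 1)\<bar> \<le> 2 * (S n - 1)\<^sup>2"
      by (rule abs_ln_one_plus_x_minus_x_bound) (use h in simp)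
    hence l: "\<bar>ln (S n) - (S n - 1)\<bar> \<le> 2 * (S n - 1)\<^sup>2" by simp
    have "\<bar>real (m n) * (ln (S n) - (S n - 1))\<bar> \<le> real (m n) * (2 * (S n - 1)\<^sup>2)"
      using l mpos by (simp add: abs_mult)
    also have "\<dots> = 2 * MS n ^ 2 / real (m n)" unfolding MS_def using mpos by (simp add: power2_eq_square field_simps)
    also have "\<dots> \<le> 2 * (c * U n) ^ 2 / (\<mu> * real n / 2)"
    proof (intro frac_le)
      have "MS n ^ 2 \<le> (c * U n) ^ 2" using MSc by (metis abs_ge_zero power2_abs power_mono)
      thus "2 * MS n ^ 2 \<le> 2 * (c * U n) ^ 2" by simp
    qed (use elim(2) \<mu>0 n0 in auto)
    also have "\<dots> = (4 * c^2 / \<mu>) * (U n ^ 2 / real n)" using \<mu>0 n0 by (simp add: field_simps power_mult_distrib)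
    also have "\<dots> \<le> (4 * c^2 / \<mu>) * (U n * ep n)" unfolding g(5) using c \<mu>0 by (intro mult_left_mono) auto
    finally show ?case using h by simp
  qed
  have lnE: "eventually (\<lambda>n. ln (E n) - Ph * U n
      = -lam * (real (Tn n) - \<tau> * U n) + Dn n + real (m n) * (ln (S n) - (S n - 1))) sequentially"
    using ev_good key
  proof eventually_elim
    case (elim n)
    have Sp: "S n > 0" using elim(2) by linarith
    have "E n = exp (-lam * real (Tn n)) * S n ^ m n" unfolding E_def by (rule good_exact[OF elim(1)])
    hence "ln (E n) = -lam * real (Tn n) + real (m n) * ln (S n)"
      using Sp by (simp add: ln_mult ln_realpow)
    thus ?case using MSe[of n] unfolding MS_def by (simp add: algebra_simps)
  qed
  have p1: "(\<lambda>n. -lam * (real (Tn n) - \<tau> * U n)) \<in> O(\<lambda>n. U n * ep n)"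
  proof (rule bigoI[of _ "\<bar>lam\<bar>"])
    show "eventually (\<lambda>n. norm (-lam * (real (Tn n) - \<tau> * U n)) \<le> \<bar>lam\<bar> * norm (U n * ep n)) sequentially"
      using ev_good
    proof eventually_elim
      case (elim n)
      note f = good_facts[OF elim] and g = good_ep[OF elim]
      have "\<bar>real (Tn n) - \<tau> * U n\<bar> \<le> U n * ep n" using f(4,5) g(2) by linarith
      hence "\<bar>lam\<bar> * \<bar>real (Tn n) - \<tau> * U n\<bar> \<le> \<bar>lam\<bar> * (U n * ep n)" by (intro mult_left_mono) auto
      thus ?case using g(1) f(9) by (simp add: abs_mult)
    qed
  qed
  have p3: "(\<lambda>n. real (m n) * (ln (S n) - (S n - 1))) \<in> O(\<lambda>n. U n * ep n)"
  proof (rule bigoI[of _ "4 * c^2 / \<mu>"])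
    show "eventually (\<lambda>n. norm (real (m n) * (ln (S n) - (S n - 1))) \<le> 4 * c^2 / \<mu> * norm (U n * ep n)) sequentially"
      using key ev_good
    proof eventually_elim
      case (elim n)
      note f = good_facts[OF elim(2)] and g = good_ep[OF elim(2)]
      show ?case using elim(1) g(1) f(9) by simp
    qed
  qed
  have all: "(\<lambda>n. -lam * (real (Tn n) - \<tau> * U n) + Dn n + real (m n) * (ln (S n) - (S n - 1))) \<in> O(\<lambda>n. U n * ep n)"
    by (intro sum_in_bigo(1) p1 p3 Dn_bigo)
  have "(\<lambda>n. ln (E n) - Ph * U n) \<in> O(\<lambda>n. U n * ep n)"
    using landau_o.big.in_cong[OF lnE] all by blast
  hence "(\<lambda>n. ln (E n) - Ph * U n) \<in> O(\<lambda>n. max 1 (real (u n) ^ 2 / real n))"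
    using Uep_bigo_max by (rule landau_o.big_trans)
  thus ?thesis unfolding E_def Ph_def Tn_def U_def .
qed

end


theorem mainTheorem8:
  fixes k r :: nat and u :: "nat \<Rightarrow> nat" and \<mu> \<tau> lam :: real and m :: "nat \<Rightarrow> nat"
  assumes "2 \<le> r" and "r \<le> k"
    and "filterlim u at_top sequentially"
    and "(\<lambda>n. real (u n) / real n) \<longlonglongrightarrow> 0"
    and "\<mu> > 0" and "\<tau> > 0"
    and "\<And>n. m n = nat \<lfloor>\<mu> * real n ^ (r-1) / real (u n) ^ (r-2)\<rfloor>"
  shows "(\<lambda>n. ln (measure_pmf.expectation
                  (chain_pmf k r n (u n) (m n) (nat \<lfloor>\<tau> * real (u n)\<rfloor>))
                  (\<lambda>(E, C). exp (lam * real_of_int E)))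
              - phi k r \<mu> lam \<tau> * real (u n))
         \<in> O(\<lambda>n. max 1 (real (u n) ^ 2 / real n))"
proof -
  interpret setting k r u \<mu> \<tau> lam m
    by unfold_locales (use assms in auto)
  show ?thesis by (rule final)
qed

end
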